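(* Let $k$ be a natural number. For all $n\geq 2^{k-1}k(2k-1)$, $$A_{2k}(n)=B_k^e(n)-B_k^o(n)=C_k^e(n+1)-C_k^o(n+1)=\tfrac12 D_{2k}(n+1).$$
   Context: All partitions are into positive parts unless stated otherwise. $A_{j}(n):=\tfrac12\big(P_1(d,n)+P'_{j-1}(d,n)+P_2(d,n)+P''_{j-1}(d,n)\big)$, where the terms are defined as follows. - $P_1(d,n)$ counts partitions of $n$ into distinct parts with smallest part exceeding $1$. - $P_2(d,n)$ counts partitions of $n$ into distinct parts whose two smallest parts differ by at least $2$ (single-part partitions count vacuously). - $P'_{j-1}(d,n)$ counts partitions of $n$ with all parts distinct except that the smallest part is $1$ with multiplicity $j-1$. - $P''_{j-1}(d,n)$ counts partitions of $n$ into distinct parts except that the second smallest part appears with multiplicity $j-1$, where the two smallest parts differ by $1$. $B_k^e(n)$ (resp. $B_k^o(n)$) is the number of partitions of $n$ having at least one odd part, with largest odd part $2\ell-1$, all of whose parts are odd except for at most $k-1$ pairwise distinct even parts in $[2\ell+2,2\ell+2k-2]$, the number of which is even (resp. odd). $C_k^e(n)$ (resp. $C_k^o(n)$) is the number of pairs $(\lambda,\ell)$ with $\ell\ge1$ and $\lambda$ a partition of $n$ satisfying three conditions: - $\lambda$ contains the part $2\ell$; - the parts not exceeding $\ell$ are distinct, while parts in $(\ell,2\ell]$ are unrestricted; - the parts larger than $2\ell$ are at most $k-1$ distinct even parts in $[2\ell+2,2\ell+2k-2]$, their number being even (resp. odd). Thus a partition is counted once per admissible $\ell$. $D_j(n)$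 counts partitions of $n$ into non-negative parts (part $0$ allowed) in which the smallest part appears exactly $j$ times and no other part repeats, with $D_j(0)=1$. Its generating function is $\sum_n D_j(n)q^n=\sum_{m\ge0}q^{mj}(-q^{m+1};q)_\infty$. *)

theory Defs
  imports Complex_Main "HOL-Library.Multiset"
begin

definition parts_pos :: "nat multiset \<Rightarrow> bool" where
  "parts_pos p \<longleftrightarrow> (\<forall>x\<in>#p. x > 0)"

definition distinct_parts :: "nat multiset \<Rightarrow> bool" where
  "distinct_parts p \<longleftrightarrow> (\<forall>x. count p x \<le> 1)"

definition P1 :: "nat \<Rightarrow> nat" where
  "P1 n = card {p. parts_pos p \<and> sum_mset p = n \<and> distinct_parts p \<and> (\<forall>x\<in>#p. x > 1)}"

definition P2 :: "nat \<Rightarrow> nat" where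
  "P2 n = card {p. parts_pos p \<and> sum_mset p = n \<and> distinct_parts p \<and>
     (\<forall>x\<in>#p. x \<noteq> Min (set_mset p) \<longrightarrow> x \<ge> Min (set_mset p) + 2)}"

definition Pprime :: "nat \<Rightarrow> nat \<Rightarrow> nat" where
  "Pprime m n = card {p. parts_pos p \<and> sum_mset p = n \<and> count p 1 = m \<and>
     Min (set_mset p) = 1 \<and> (\<forall>x. x \<noteq> 1 \<longrightarrow> count p x \<le> 1)}"

definition Pdprime :: "nat \<Rightarrow> nat \<Rightarrow> nat" where
  "Pdprime m n = card {p. parts_pos p \<and> sum_mset p = n \<and>
     (\<exists>s. count p s = 1 \<and> count p (s + 1) = m \<and> (\<forall>x\<in>#p. s \<le> x) \<and>
          (\<forall>x. x \<noteq> s + 1 \<longrightarrow> count p x \<le> 1))}"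

definition A :: "nat \<Rightarrow> nat \<Rightarrow> real" where
  "A j n = (real (P1 n) + real (Pprime (j - 1) n) + real (P2 n) + real (Pdprime (j - 1) n)) / 2"

text \<open>B_k(n) with parity flag e (True = even number of even parts).
  The largest odd part is L = 2l-1, so the interval [2l+2, 2l+2k-2] is [L+3, L+2k-1].\<close>
definition Bset :: "bool \<Rightarrow> nat \<Rightarrow> nat \<Rightarrow> nat multiset set" where
  "Bset e k n = {p. parts_pos p \<and> sum_mset p = n \<and> (\<exists>x\<in>#p. odd x) \<and>
     (let L = Max {x \<in> set_mset p. odd x} in
        \<forall>x\<in>#p. even x \<longrightarrow> L + 3 \<le> x \<and> x \<le> L + 2 * k - 1 \<and> count p x = 1) \<and>
     even (size (filter_mset even p)) = e}"

definition Be :: "nat \<Rightarrow> nat \<Rightarrow> nat" where "Be k n = card (Bset True k n)"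
definition Bo :: "nat \<Rightarrow> nat \<Rightarrow> nat" where "Bo k n = card (Bset False k n)"

definition Cset :: "bool \<Rightarrow> nat \<Rightarrow> nat \<Rightarrow> (nat multiset \<times> nat) set" where
  "Cset e k n = {(p, l). l \<ge> 1 \<and> parts_pos p \<and> sum_mset p = n \<and> 2 * l \<in># p \<and>
     (\<forall>x. x \<le> l \<longrightarrow> count p x \<le> 1) \<and>
     (\<forall>x\<in>#p. x > 2 * l \<longrightarrow> even x \<and> 2 * l + 2 \<le> x \<and> x \<le> 2 * l + 2 * k - 2 \<and> count p x = 1) \<and>
     even (size (filter_mset (\<lambda>x. x > 2 * l) p)) = e}"

definition Ce :: "nat \<Rightarrow> nat \<Rightarrow> nat" where "Ce k n = card (Cset True k n)"
definition Co :: "nat \<Rightarrow> nat \<Rightarrow> nat" where "Co k n = card (Cset False k n)"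

text \<open>D_j(n): partitions into non-negative parts (0 allowed), smallest part appearing
  exactly j times, no other part repeated.\<close>
definition D :: "nat \<Rightarrow> nat \<Rightarrow> nat" where
  "D j n = card {p :: nat multiset. p \<noteq> {#} \<and> sum_mset p = n \<and>
     count p (Min (set_mset p)) = j \<and>
     (\<forall>x. x \<noteq> Min (set_mset p) \<longrightarrow> count p x \<le> 1)}"

end

theory Submission
  imports Defs "HOL-Computational_Algebra.Formal_Power_Series"
begin

unbundle fps_syntax


abbreviation XX :: "real fps" where "XX \<equiv> fps_X"

definition eqm :: "nat \<Rightarrow> real fps \<Rightarrow> real fps \<Rightarrow> bool" where
  "eqm M f g \<longleftrightarrow> (\<forall>i<M. f $ i = g $ i)"

lemma eqm_refl[simp]: "eqm M f f" by (simp add: eqm_def)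
lemma eqm_sym: "eqm M f g \<Longrightarrow> eqm M g f" by (simp add: eqm_def)
lemma eqm_trans: "eqm M f g \<Longrightarrow> eqm M g h \<Longrightarrow> eqm M f h" by (simp add: eqm_def)
lemma eqm_add: "eqm M f g \<Longrightarrow> eqm M f' g' \<Longrightarrow> eqm M (f + f') (g + g')" by (simp add: eqm_def)
lemma eqm_diff: "eqm M f g \<Longrightarrow> eqm M f' g' \<Longrightarrow> eqm M (f - f') (g - g')" by (simp add: eqm_def)
lemma eqm_mono: "eqm M f g \<Longrightarrow> M' \<le> M \<Longrightarrow> eqm M' f g" by (simp add: eqm_def)
lemma eqm_multL: "eqm M f g \<Longrightarrow> eqm M (h * f) (h * g)"
  unfolding eqm_def fps_mult_nth by (auto intro!: sum.cong)
lemma eqm_multR: "eqm M f g \<Longrightarrow> eqm M (f * h) (g * h)"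
  using eqm_multL[of M f g h] by (simp add: mult.commute)
lemma eqm_Xpow: "M \<le> m \<Longrightarrow> eqm M (XX ^ m * h) 0"
  by (simp add: eqm_def fps_X_power_mult_nth)
lemma eqm_eq: "f = g \<Longrightarrow> eqm M f g" by simp
lemma eqm_cancel:
  assumes "eqm M (f * Q) (g * Q)" "Q $ 0 \<noteq> 0"
  shows "eqm M f g"
proof -
  have "eqm M (f * Q * inverse Q) (g * Q * inverse Q)" using eqm_multR[OF assms(1)] .
  moreover have "Q * inverse Q = 1" using inverse_mult_eq_1'[OF assms(2)] .
  ultimately show ?thesis by (simp add: mult.assoc)
qed

definition lowdeg :: "nat \<Rightarrow> real fps \<Rightarrow> bool" where
  "lowdeg d f \<longleftrightarrow> (\<forall>i>d. f $ i = 0)"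

lemma lowdeg_mono: "lowdeg d f \<Longrightarrow> d \<le> d' \<Longrightarrow> lowdeg d' f" by (simp add: lowdeg_def)
lemma lowdeg_add: "lowdeg d f \<Longrightarrow> lowdeg d g \<Longrightarrow> lowdeg d (f + g)" by (simp add: lowdeg_def)
lemma lowdeg_diff: "lowdeg d f \<Longrightarrow> lowdeg d g \<Longrightarrow> lowdeg d (f - g)" by (simp add: lowdeg_def)
lemma lowdeg_const: "lowdeg 0 (fps_const c)" by (simp add: lowdeg_def)
lemma lowdeg_one: "lowdeg 0 1" by (simp add: lowdeg_def)
lemma lowdeg_numeral: "lowdeg 0 (numeral w)" by (simp add: lowdeg_def numeral_fps_const)
lemma lowdeg_Xpow: "lowdeg m (XX ^ m)" by (simp add: lowdeg_def)
lemma lowdeg_X: "lowdeg 1 XX" by (simp add: lowdeg_def)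
lemma lowdeg_mult: "lowdeg a f \<Longrightarrow> lowdeg b g \<Longrightarrow> lowdeg (a + b) (f * g)"
  unfolding lowdeg_def fps_mult_nth
proof (intro allI impI)
  fix i assume f: "\<forall>i>a. f $ i = 0" and g: "\<forall>i>b. g $ i = 0" and i: "a + b < i"
  show "(\<Sum>j = 0..i. f $ j * g $ (i - j)) = 0"
  proof (rule sum.neutral, intro ballI)
    fix j assume "j \<in> {0..i}"
    show "f $ j * g $ (i - j) = 0"
    proof (cases "j > a")
      case True then show ?thesis using f by simp
    next
      case False then have "i - j > b" using i by simp
      then show ?thesis using g by simp
    qed
  qed
qed

lemma eqm_nth: "eqm M f g \<Longrightarrow> i < M \<Longrightarrow> f $ i = g $ i" by (simp add: eqm_def)


definition msS :: "nat set \<Rightarrow> (nat \<Rightarrow> nat set) \<Rightarrow> nat \<Rightarrow> nat multiset set" where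
  "msS V M n = {p. set_mset p \<subseteq> V \<and> (\<forall>i\<in>V. count p i \<in> M i) \<and> sum_mset p = n}"

definition wt :: "(nat \<Rightarrow> real) \<Rightarrow> nat multiset \<Rightarrow> real" where
  "wt \<sigma> p = prod_mset (image_mset \<sigma> p)"

definition fac :: "nat set \<Rightarrow> real \<Rightarrow> nat \<Rightarrow> real fps" where
  "fac S c i = Abs_fps (\<lambda>n. if i dvd n \<and> n div i \<in> S then c ^ (n div i) else 0)"

lemma wt_add: "wt \<sigma> (p + q) = wt \<sigma> p * wt \<sigma> q" by (simp add: wt_def)
lemma wt_rep: "wt \<sigma> (replicate_mset c i) = \<sigma> i ^ c" by (simp add: wt_def)
lemma wt_one: "wt (\<lambda>_. 1) p = 1" by (simp add: wt_def)

lemma mem_le_sum: "x \<in># p \<Longrightarrow> x \<le> sum_mset (p::nat multiset)"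
proof -
  assume "x \<in># p"
  then obtain q where "p = add_mset x q" using multi_member_split by metis
  then show ?thesis by simp
qed

lemma msS_empty: "msS {} M n = (if n = 0 then {{#}} else {})"
  by (auto simp: msS_def)

lemma le_of_mult_le: "0 < (i::nat) \<Longrightarrow> i * c \<le> n \<Longrightarrow> c \<le> n"
  by (metis le_trans mult_le_mono1 One_nat_def Suc_leI mult_1)

lemma msS_insert:
  assumes "i \<notin> V" "i > 0"
  shows "msS (insert i V) M n = (\<lambda>(c,q). replicate_mset c i + q) `
           (SIGMA c:{c. c \<in> M i \<and> i * c \<le> n}. msS V M (n - i * c))"
proof (intro set_eqI iffI)
  fix p assume p: "p \<in> msS (insert i V) M n"
  define c where "c = count p i"
  define q where "q = filter_mset (\<lambda>x. x \<noteq> i) p"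
  have pq: "p = replicate_mset c i + q"
    unfolding c_def q_def using multiset_partition[of p "\<lambda>x. x = i"]
    by (simp add: filter_eq_replicate_mset)
  have sp: "sum_mset p = i * c + sum_mset q" using pq by simp
  have q1: "set_mset q \<subseteq> V" using p by (auto simp: msS_def q_def)
  have q2: "\<forall>j\<in>V. count q j \<in> M j" using p assms(1) by (auto simp: msS_def q_def)
  have c1: "c \<in> M i" using p by (simp add: msS_def c_def)
  have c2: "i * c \<le> n" using p sp by (simp add: msS_def)
  have "sum_mset p = n" using p unfolding msS_def by simp
  then have sq: "sum_mset q = n - i * c" using sp by linarith
  have "q \<in> msS V M (n - i * c)" using q1 q2 sq by (simp add: msS_def)
  then have "(c, q) \<in> (SIGMA c:{c. c \<in> M i \<and> i * c \<le> n}. msS V M (n - i * c))"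
    using c1 c2 by simp
  then show "p \<in> (\<lambda>(c,q). replicate_mset c i + q) ` (SIGMA c:{c. c \<in> M i \<and> i * c \<le> n}. msS V M (n - i * c))"
    using pq by (metis (no_types, lifting) case_prod_conv image_eqI)
next
  fix p assume "p \<in> (\<lambda>(c,q). replicate_mset c i + q) ` (SIGMA c:{c. c \<in> M i \<and> i * c \<le> n}. msS V M (n - i * c))"
  then obtain c q where pq: "p = replicate_mset c i + q" and c: "c \<in> M i" "i * c \<le> n"
    and q: "q \<in> msS V M (n - i * c)" by auto
  have qi: "count q i = 0" using q assms(1) by (auto simp: msS_def count_eq_zero_iff)
  have s1: "set_mset p \<subseteq> insert i V" using q unfolding pq msS_def by auto
  have s2: "\<forall>j\<in>insert i V. count p j \<in> M j"
  proof
    fix j assume "j \<in> insert i V"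
    then show "count p j \<in> M j"
    proof
      assume "j = i" then show ?thesis using qi c pq by simp
    next
      assume j: "j \<in> V" then have "j \<noteq> i" using assms(1) by auto
      then show ?thesis using q j pq by (simp add: msS_def)
    qed
  qed
  have s3: "sum_mset p = n" using q c pq by (simp add: msS_def)
  show "p \<in> msS (insert i V) M n" using s1 s2 s3 by (simp add: msS_def)
qed

lemma msS_inj:
  assumes "i \<notin> V"
  shows "inj_on (\<lambda>(c,q). replicate_mset c i + q) (SIGMA c:{c. c \<in> M i \<and> i * c \<le> n}. msS V M (n - i * c))"
proof (rule inj_onI, clarify)
  fix c q c' q'
  assume q: "q \<in> msS V M (n - i * c)" and q': "q' \<in> msS V M (n - i * c')"
    and e: "replicate_mset c i + q = replicate_mset c' i + q'"
  have qi: "count q i = 0" "count q' i = 0" using q q' assms by (auto simp: msS_def count_eq_zero_iff)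
  have "count (replicate_mset c i + q) i = count (replicate_mset c' i + q') i" using e by simp
  then have cc: "c = c'" using qi by simp
  then show "c = c' \<and> q = q'" using e by simp
qed

lemma fac_mult_nth:
  assumes "i > 0"
  shows "(fac S c i * g) $ n = (\<Sum>m\<in>{m. m \<in> S \<and> i * m \<le> n}. c ^ m * g $ (n - i * m))"
proof -
  have fin: "finite {m. m \<in> S \<and> i * m \<le> n}"
    by (rule finite_subset[of _ "{..n}"]) (auto dest: le_of_mult_le[OF assms])
  have "(fac S c i * g) $ n = (\<Sum>j=0..n. (if i dvd j \<and> j div i \<in> S then c ^ (j div i) else 0) * g $ (n - j))"
    by (simp add: fps_mult_nth fac_def)
  also have "\<dots> = (\<Sum>j\<in>{j\<in>{0..n}. i dvd j \<and> j div i \<in> S}. c ^ (j div i) * g $ (n - j))"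
    by (subst sum.inter_filter) (auto intro!: sum.cong)
  also have "{j\<in>{0..n}. i dvd j \<and> j div i \<in> S} = (\<lambda>m. i * m) ` {m. m \<in> S \<and> i * m \<le> n}"
    using assms by (auto simp: image_iff)
  also have "(\<Sum>j\<in>(\<lambda>m. i * m) ` {m. m \<in> S \<and> i * m \<le> n}. c ^ (j div i) * g $ (n - j))
      = (\<Sum>m\<in>{m. m \<in> S \<and> i * m \<le> n}. c ^ m * g $ (n - i * m))"
    using assms by (subst sum.reindex) (auto simp: inj_on_def)
  finally show ?thesis .
qed

lemma count_main:
  assumes "finite V" "0 \<notin> V"
  shows "finite (msS V M n) \<and> (\<Prod>i\<in>V. fac (M i) (\<sigma> i) i) $ n = (\<Sum>p\<in>msS V M n. wt \<sigma> p)"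
  using assms
proof (induction V arbitrary: n rule: finite_induct)
  case empty
  then show ?case by (simp add: msS_empty wt_def)
next
  case (insert i V)
  have i0: "i > 0" using insert.prems by auto
  have IH: "\<And>n. finite (msS V M n) \<and> (\<Prod>i\<in>V. fac (M i) (\<sigma> i) i) $ n = (\<Sum>p\<in>msS V M n. wt \<sigma> p)"
    using insert.IH insert.prems by auto
  let ?C = "{c. c \<in> M i \<and> i * c \<le> n}"
  have finC: "finite ?C"
    by (rule finite_subset[of _ "{..n}"]) (auto dest: le_of_mult_le[OF i0])
  have finS: "finite (SIGMA c:?C. msS V M (n - i * c))" using finC IH by auto
  have eq: "msS (insert i V) M n = (\<lambda>(c,q). replicate_mset c i + q) ` (SIGMA c:?C. msS V M (n - i * c))"
    using msS_insert[OF insert.hyps(2) i0] .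
  have "(\<Sum>p\<in>msS (insert i V) M n. wt \<sigma> p) = (\<Sum>x\<in>(SIGMA c:?C. msS V M (n - i * c)). wt \<sigma> ((\<lambda>(c,q). replicate_mset c i + q) x))"
    unfolding eq by (simp add: sum.reindex[OF msS_inj[OF insert.hyps(2)]])
  also have "\<dots> = (\<Sum>c\<in>?C. \<Sum>q\<in>msS V M (n - i * c). \<sigma> i ^ c * wt \<sigma> q)"
    by (subst sum.Sigma[OF finC]) (auto simp: IH wt_add wt_rep split_def)
  also have "\<dots> = (\<Sum>c\<in>?C. \<sigma> i ^ c * (\<Prod>i\<in>V. fac (M i) (\<sigma> i) i) $ (n - i * c))"
    using IH by (simp add: sum_distrib_left)
  also have "\<dots> = (fac (M i) (\<sigma> i) i * (\<Prod>i\<in>V. fac (M i) (\<sigma> i) i)) $ n"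
    by (simp add: fac_mult_nth[OF i0])
  also have "\<dots> = (\<Prod>i\<in>insert i V. fac (M i) (\<sigma> i) i) $ n"
    using insert.hyps by simp
  finally show ?case using eq finS by simp
qed


lemma sum_wt_one: "(\<Sum>p\<in>S. wt (\<lambda>_. 1) p) = real (card S)"
  by (simp add: wt_one)

lemma fac_01:
  assumes "i > 0"
  shows "fac {0,1} c i = 1 + fps_const c * XX ^ i"
proof (rule fps_ext)
  fix n
  show "fac {0,1} c i $ n = (1 + fps_const c * XX ^ i) $ n"
  proof (cases "n = 0")
    case True then show ?thesis using assms by (simp add: fac_def)
  next
    case False
    have "(i dvd n \<and> n div i \<in> {0,1}) \<longleftrightarrow> n = i"
      using assms False by (auto elim!: dvdE)
    then show ?thesis using False assms by (auto simp: fac_def)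
  qed
qed

lemma fac_UNIV_inv:
  assumes "i > 0"
  shows "fac UNIV 1 i * (1 - XX ^ i) = 1"
proof (rule fps_ext)
  fix n
  have e: "fac UNIV 1 i * (1 - XX ^ i) = fac UNIV 1 i - XX ^ i * fac UNIV 1 i"
    by (simp add: algebra_simps)
  show "(fac UNIV 1 i * (1 - XX ^ i)) $ n = (1::real fps) $ n"
  proof (cases "n < i")
    case True
    have "i dvd n \<longleftrightarrow> n = 0" using True assms by (auto elim!: dvdE)
    then show ?thesis using True unfolding e by (simp add: fps_X_power_mult_nth fac_def)
  next
    case False
    have "i dvd n \<longleftrightarrow> i dvd (n - i)" using False by (simp add: dvd_minus_self)
    then show ?thesis using False assms unfolding e by (simp add: fps_X_power_mult_nth fac_def)
  qed
qed

lemma fac_ge1: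
  assumes "i > 0"
  shows "fac {m. m \<ge> 1} 1 i = XX ^ i * fac UNIV 1 i"
proof (rule fps_ext)
  fix n
  show "fac {m. m \<ge> 1} 1 i $ n = (XX ^ i * fac UNIV 1 i) $ n"
  proof (cases "n < i")
    case True
    then have "\<not> (i dvd n \<and> n div i \<ge> 1)" using assms
      by (metis div_less not_one_le_zero)
    then show ?thesis using True by (simp add: fps_X_power_mult_nth fac_def)
  next
    case False
    have "i dvd n \<longleftrightarrow> i dvd (n - i)" using False by (simp add: dvd_minus_self)
    moreover have "i dvd n \<Longrightarrow> n div i \<ge> 1" using False assms
      by (metis div_greater_zero_iff One_nat_def Suc_leI not_less)
    ultimately show ?thesis using False assms by (auto simp: fps_X_power_mult_nth fac_def)
  qed
qed

lemma fac_single: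
  assumes "i > 0"
  shows "fac {m} 1 i = XX ^ (i * m)"
proof (rule fps_ext)
  fix n
  have "(i dvd n \<and> n div i = m) \<longleftrightarrow> n = i * m" using assms by auto
  then show "fac {m} 1 i $ n = XX ^ (i * m) $ n" by (simp add: fac_def)
qed


lemma eqm_comb:
  assumes "eqm M u1 v1" "eqm M u2 v2" "eqm M u3 v3"
    and "f - g = ka * (u1 - v1) + kb * (u2 - v2) + kc * (u3 - v3)"
  shows "eqm M f g"
proof -
  have z: "eqm M (c * (u - v)) 0" if "eqm M u v" for c u v
  proof -
    have "eqm M (c * (u - v)) (c * (v - v))" by (rule eqm_multL, rule eqm_diff[OF that eqm_refl])
    then show ?thesis by simp
  qed
  have "eqm M (ka * (u1 - v1) + kb * (u2 - v2) + kc * (u3 - v3)) (0 + 0 + 0)"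
    by (intro eqm_add z assms)
  then have "eqm M (f - g) 0" using assms(4) by simp
  then show ?thesis by (simp add: eqm_def)
qed

lemma eqm_comb5:
  assumes "eqm M u1 v1" "eqm M u2 v2" "eqm M u3 v3" "eqm M u4 v4" "eqm M u5 v5"
    and "f - g = ka * (u1 - v1) + kb * (u2 - v2) + kc * (u3 - v3) + kd * (u4 - v4) + ke * (u5 - v5)"
  shows "eqm M f g"
proof -
  have z: "eqm M (c * (u - v)) 0" if "eqm M u v" for c u v
  proof -
    have "eqm M (c * (u - v)) (c * (v - v))" by (rule eqm_multL, rule eqm_diff[OF that eqm_refl])
    then show ?thesis by simp
  qed
  have "eqm M (ka * (u1 - v1) + kb * (u2 - v2) + kc * (u3 - v3) + kd * (u4 - v4) + ke * (u5 - v5)) (0 + 0 + 0 + 0 + 0)"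
    by (intro eqm_add z assms)
  then have "eqm M (f - g) 0" using assms(6) by simp
  then show ?thesis by (simp add: eqm_def)
qed

definition Fu :: "nat \<Rightarrow> real fps" where "Fu i = fac UNIV 1 i"

lemma Fu_inv: "i > 0 \<Longrightarrow> Fu i * (1 - XX ^ i) = 1"
  unfolding Fu_def by (rule fac_UNIV_inv)

definition Ob :: "nat \<Rightarrow> real fps" where "Ob l = (\<Prod>i\<in>{1..l}. Fu (2 * i - 1))"

lemma Ob_0[simp]: "Ob 0 = 1" by (simp add: Ob_def)

lemma Ob_Suc: "Ob (Suc l) = Ob l * Fu (2 * l + 1)"
  by (simp add: Ob_def prod.cl_ivl_Suc)

lemma Ob_rec: "Ob (Suc l) * (1 - XX ^ (2 * l + 1)) = Ob l"
  using Fu_inv[of "2 * l + 1"] by (simp add: Ob_Suc mult.assoc)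

lemma Ob_tel: "XX ^ (2 * l + 1) * Ob (Suc l) = Ob (Suc l) - Ob l"
  using Ob_rec[of l] by (simp add: algebra_simps)

definition Psi :: "nat \<Rightarrow> (nat \<Rightarrow> real fps) \<Rightarrow> real fps" where
  "Psi N f = (\<Sum>l\<in>{1..N}. XX ^ (2 * l - 1) * Ob l * f l)"

lemma Psi_0[simp]: "Psi 0 f = 0" by (simp add: Psi_def)

lemma Psi_Suc: "Psi (Suc N) f = Psi N f + XX ^ (2 * N + 1) * Ob (Suc N) * f (Suc N)"
  by (simp add: Psi_def sum.cl_ivl_Suc)

lemma Psi_add: "Psi N (\<lambda>l. f l + g l) = Psi N f + Psi N g"
  by (simp add: Psi_def algebra_simps sum.distrib)
lemma Psi_diff: "Psi N (\<lambda>l. f l - g l) = Psi N f - Psi N g"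
  by (simp add: Psi_def algebra_simps sum_subtractf)
lemma Psi_cmult: "Psi N (\<lambda>l. c * f l) = c * Psi N f"
  by (simp add: Psi_def sum_distrib_left algebra_simps)

lemma Psi_rel:
  "Psi N (\<lambda>l. XX ^ (2 * l) * f l) =
     XX * Psi N f - XX ^ 3 * Psi N (\<lambda>l. f (Suc l)) - XX ^ 2 * f 1 + XX ^ (2 * N + 2) * Ob N * f (Suc N)"
proof (induction N)
  case 0
  then show ?case by (simp add: power2_eq_square)
next
  case (Suc N)
  define y where "y = XX ^ (2 * N + 1)"
  have tel: "y * Ob (Suc N) = Ob (Suc N) - Ob N" unfolding y_def by (rule Ob_tel)
  have p1: "XX ^ (2 * Suc N) = y * XX" unfolding y_def by (simp add: power_Suc2)
  have e2: "2 * Suc N + 2 = (2 * N + 1) + 3" by simp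
  have p2: "XX ^ (2 * Suc N + 2) = y * XX ^ 3" unfolding y_def by (simp only: e2 power_add)
  have p3: "XX ^ (2 * N + 2) = y * XX" unfolding y_def by (simp add: power_Suc2)
  have p4: "XX ^ (2 * N + 1) = y" unfolding y_def by simp
  show ?case
    unfolding Psi_Suc p1 p2 p3 p4 using Suc.IH[unfolded p3] tel
    by algebra
qed

lemma Psi_rel_eqm:
  "eqm (2 * N + 2) (Psi N (\<lambda>l. XX ^ (2 * l) * f l))
     (XX * Psi N f - XX ^ 3 * Psi N (\<lambda>l. f (Suc l)) - XX ^ 2 * f 1)"
proof -
  have "eqm (2 * N + 2) (XX ^ (2 * N + 2) * (Ob N * f (Suc N))) 0" by (rule eqm_Xpow) simp
  then show ?thesis unfolding Psi_rel by (simp add: eqm_def mult.assoc)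
qed

lemma Psi_one: "Psi N (\<lambda>_. 1) = Ob N - 1"
proof (induction N)
  case 0 then show ?case by simp
next
  case (Suc N) then show ?case using Ob_tel[of N] by (simp add: Psi_Suc)
qed


lemma Xpow_eq: "a + b = c + d \<Longrightarrow> XX ^ a * XX ^ b = XX ^ c * XX ^ d"
  by (simp add: power_add[symmetric])

definition pp :: "nat \<Rightarrow> nat \<Rightarrow> real fps" where
  "pp b l = (\<Prod>i\<in>{1..b}. 1 - XX ^ (2 * l + 2 * i))"

lemma pp_0[simp]: "pp 0 l = 1" by (simp add: pp_def)

lemma pp_Suc: "pp (Suc b) l = pp b l * (1 - XX ^ (2 * b + 2) * XX ^ (2 * l))"
proof -
  have "XX ^ (2 * l + 2 * Suc b) = XX ^ (2 * b + 2) * XX ^ (2 * l)"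
    by (simp add: power_add[symmetric])
  then show ?thesis by (simp add: pp_def prod.cl_ivl_Suc)
qed

lemma pp_shift: "pp (Suc b) l = (1 - XX ^ 2 * XX ^ (2 * l)) * pp b (Suc l)"
proof (induction b)
  case 0
  then show ?case by (simp add: pp_Suc mult.commute power2_eq_square)
next
  case (Suc b)
  have e: "XX ^ (2 * Suc b + 2) * XX ^ (2 * l) = XX ^ (2 * b + 2) * XX ^ (2 * Suc l)"
    by (rule Xpow_eq) simp
  have "pp (Suc (Suc b)) l = pp (Suc b) l * (1 - XX ^ (2 * Suc b + 2) * XX ^ (2 * l))"
    by (rule pp_Suc)
  also have "\<dots> = (1 - XX ^ 2 * XX ^ (2 * l)) * (pp b (Suc l) * (1 - XX ^ (2 * b + 2) * XX ^ (2 * Suc l)))"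
    unfolding Suc.IH e by (simp only: mult.assoc)
  also have "\<dots> = (1 - XX ^ 2 * XX ^ (2 * l)) * pp (Suc b) (Suc l)"
    by (simp only: pp_Suc[symmetric])
  finally show ?case .
qed

definition aa :: "nat \<Rightarrow> nat \<Rightarrow> real fps" where "aa N b = Psi N (pp b)"
definition dd :: "nat \<Rightarrow> nat \<Rightarrow> real fps" where "dd N b = Psi N (\<lambda>l. XX ^ (2 * l) * pp b l)"
definition ee :: "nat \<Rightarrow> nat \<Rightarrow> real fps" where
  "ee N b = Psi N (\<lambda>l. XX ^ (2 * l) * (XX ^ (2 * l) * pp b l))"

lemma aa_Suc: "aa N (Suc b) = aa N b - XX ^ (2 * b + 2) * dd N b"
proof -
  have "pp (Suc b) = (\<lambda>l. pp b l - XX ^ (2 * b + 2) * (XX ^ (2 * l) * pp b l))"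
    by (simp add: fun_eq_iff pp_Suc algebra_simps)
  then show ?thesis unfolding aa_def dd_def by (simp add: Psi_diff Psi_cmult)
qed

lemma dd_Suc: "dd N (Suc b) = dd N b - XX ^ (2 * b + 2) * ee N b"
proof -
  have "(\<lambda>l. XX ^ (2 * l) * pp (Suc b) l) =
      (\<lambda>l. XX ^ (2 * l) * pp b l - XX ^ (2 * b + 2) * (XX ^ (2 * l) * (XX ^ (2 * l) * pp b l)))"
    by (simp add: fun_eq_iff pp_Suc algebra_simps)
  then show ?thesis unfolding ee_def dd_def by (simp add: Psi_diff Psi_cmult)
qed

lemma ee_rel:
  "eqm (2 * N + 2) (ee N b)
     ((1 + XX) * dd N b - XX * aa N b + XX ^ 3 * aa N (Suc b) + XX ^ 2 * pp b 1 - XX ^ 4 * pp b 1)"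
proof -
  define S where "S = Psi N (\<lambda>l. pp b (Suc l))"
  define W where "W = Psi N (\<lambda>l. XX ^ (2 * l) * pp b (Suc l))"
  have R1: "eqm (2 * N + 2) (dd N b) (XX * aa N b - XX ^ 3 * S - XX ^ 2 * pp b 1)"
    unfolding dd_def aa_def S_def by (rule Psi_rel_eqm)
  have R2: "eqm (2 * N + 2) (ee N b) (XX * dd N b - XX ^ 3 * Psi N (\<lambda>l. XX ^ (2 * Suc l) * pp b (Suc l)) - XX ^ 2 * (XX ^ 2 * pp b 1))"
    unfolding dd_def ee_def using Psi_rel_eqm[of N "\<lambda>l. XX ^ (2 * l) * pp b l"] by simp
  have "(\<lambda>l. XX ^ (2 * Suc l) * pp b (Suc l)) = (\<lambda>l. XX ^ 2 * (XX ^ (2 * l) * pp b (Suc l)))"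
    by (simp add: fun_eq_iff power_add[symmetric] mult.assoc[symmetric])
  then have Wr: "Psi N (\<lambda>l. XX ^ (2 * Suc l) * pp b (Suc l)) = XX ^ 2 * W"
    unfolding W_def by (simp add: Psi_cmult)
  have "pp (Suc b) = (\<lambda>l. pp b (Suc l) - XX ^ 2 * (XX ^ (2 * l) * pp b (Suc l)))"
    by (simp add: fun_eq_iff pp_shift algebra_simps)
  then have A1: "aa N (Suc b) = S - XX ^ 2 * W"
    unfolding aa_def S_def W_def by (simp add: Psi_diff Psi_cmult)
  show ?thesis
    apply (rule eqm_comb[where ka=1 and kb="-1" and kc=0, OF R2[unfolded Wr] R1 eqm_refl[of _ 0]])
    unfolding A1 by algebra
qed

definition cc :: "nat \<Rightarrow> real fps" where "cc b = 1 + XX - XX ^ (2 * b + 3)"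

fun hh :: "nat \<Rightarrow> real fps" where
  "hh 0 = XX ^ 2"
| "hh (Suc b) = hh b + XX ^ (2 * b + 4) * (1 - XX ^ 2) * pp b 1"

lemma claim:
  "eqm (2 * N + 2) (cc b * aa N b - dd N b) (aa N 0 + hh b)"
proof (induction b)
  case 0
  have pz: "pp 0 = (\<lambda>_. 1)" by (simp add: fun_eq_iff)
  have S0: "Psi N (\<lambda>l. pp 0 (Suc l)) = aa N 0" by (simp add: aa_def pz)
  have R1: "eqm (2 * N + 2) (dd N 0) (XX * aa N 0 - XX ^ 3 * aa N 0 - XX ^ 2 * pp 0 1)"
    unfolding dd_def using Psi_rel_eqm[of N "pp 0"] S0 by (simp add: aa_def)
  show ?case
    apply (rule eqm_comb[where ka="-1" and kb=0 and kc=0, OF R1 eqm_refl[of _ 0] eqm_refl[of _ 0]])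
    by (simp add: cc_def) algebra
next
  case (Suc b)
  define y where "y = XX ^ (2 * b + 2)"
  have e1: "2 * b + 3 = (2 * b + 2) + 1" by simp
  have c1: "cc b = 1 + XX - y * XX" unfolding cc_def y_def by (simp only: e1 power_add power_one_right)
  have e2: "2 * Suc b + 3 = (2 * b + 2) + 3" by simp
  have c2: "cc (Suc b) = 1 + XX - y * XX ^ 3" unfolding cc_def y_def by (simp only: e2 power_add)
  have e3: "2 * b + 4 = (2 * b + 2) + 2" by simp
  have h2: "hh (Suc b) = hh b + y * XX ^ 2 * (1 - XX ^ 2) * pp b 1"
    unfolding y_def by (simp only: hh.simps e3 power_add)
  have ER: "eqm (2 * N + 2) (ee N b)
     ((1 + XX) * dd N b - XX * aa N b + XX ^ 3 * (aa N b - y * dd N b) + XX ^ 2 * pp b 1 - XX ^ 4 * pp b 1)"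
    using ee_rel[of N b] unfolding aa_Suc y_def .
  show ?case
    apply (rule eqm_comb[where ka=y and kb=1 and kc=0, OF ER Suc.IH eqm_refl[of _ 0]])
    unfolding aa_Suc dd_Suc c1 c2 h2 y_def[symmetric] by algebra
qed


definition En :: "nat \<Rightarrow> nat \<Rightarrow> real fps" where
  "En N m = (\<Prod>i\<in>{Suc m..N}. 1 + XX ^ i)"

lemma En_rec: "m < N \<Longrightarrow> En N m = (1 + XX ^ Suc m) * En N (Suc m)"
  unfolding En_def by (subst prod.atLeast_Suc_atMost) auto

lemma En_N[simp]: "En N N = 1" by (simp add: En_def)

definition G :: "nat \<Rightarrow> nat \<Rightarrow> real fps" where
  "G N s = (\<Sum>m\<in>{0..N}. XX ^ (s * m) * En N m)"

lemma G_key: "XX ^ s * G N s = G N s + G N (Suc s) - 2 * En N 0 + XX ^ (s * Suc N)"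
proof (cases N)
  case 0
  then show ?thesis by (simp add: G_def En_def)
next
  case (Suc n)
  define T1 where "T1 = (\<Sum>m=0..n. XX ^ (s * Suc m) * En N (Suc m))"
  define T2 where "T2 = (\<Sum>m=0..n. XX ^ (Suc s * Suc m) * En N (Suc m))"
  have "XX ^ s * G N s = (\<Sum>m=0..Suc n. XX ^ (s * Suc m) * En N m)"
    unfolding G_def Suc sum_distrib_left
    by (rule sum.cong) (simp_all only: mult_Suc_right power_add mult.assoc)
  also have "\<dots> = (\<Sum>m=0..n. XX ^ (s * Suc m) * En N m) + XX ^ (s * Suc N)"
    by (simp add: Suc)
  also have "(\<Sum>m=0..n. XX ^ (s * Suc m) * En N m) = T1 + T2"
  proof -
    have "(\<Sum>m=0..n. XX ^ (s * Suc m) * En N m) =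
        (\<Sum>m=0..n. XX ^ (s * Suc m) * En N (Suc m) + XX ^ (Suc s * Suc m) * En N (Suc m))"
    proof (rule sum.cong)
      fix m assume "m \<in> {0..n}"
      then have "m < N" using Suc by simp
      then show "XX ^ (s * Suc m) * En N m = XX ^ (s * Suc m) * En N (Suc m) + XX ^ (Suc s * Suc m) * En N (Suc m)"
        by (subst En_rec) (simp_all add: algebra_simps power_add[symmetric])
    qed simp
    then show ?thesis unfolding T1_def T2_def by (simp only: sum.distrib)
  qed
  also have "G N s = En N 0 + T1"
    unfolding G_def T1_def Suc by (simp only: sum.atLeast0_atMost_Suc_shift mult_0_right power_0 mult_1_left comp_def)
  moreover have "G N (Suc s) = En N 0 + T2"
    unfolding G_def T2_def Suc by (simp only: sum.atLeast0_atMost_Suc_shift mult_0_right power_0 mult_1_left comp_def)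
  ultimately show ?thesis by simp
qed

lemma G_rec: "G N (Suc s) = (XX ^ s - 1) * G N s + 2 * En N 0 - XX ^ (s * Suc N)"
  using G_key[of s N] by (simp add: algebra_simps)

lemma prod_nth0: "finite I \<Longrightarrow> (\<Prod>i\<in>I. f i) $ 0 = (\<Prod>i\<in>I. f i $ 0)"
  by (induction I rule: finite_induct) auto

lemma ring_aux1:
  fixes a b P P' :: "'a::comm_ring_1"
  assumes "(1 - a) * P' = P * (1 - b) * (1 - a * a)"
  shows "P * (1 + a) * (1 - b) * (1 - a) = P' * (1 - a)"
proof -
  have "P * (1 + a) * (1 - b) * (1 - a) = P * (1 - b) * (1 - a * a)" by (simp add: algebra_simps)
  then show ?thesis using assms by (simp add: mult.commute)
qed

lemma euler_fin:
  "(\<Prod>i\<in>{1..l}. 1 + XX ^ i) * (\<Prod>i\<in>{1..l}. 1 - XX ^ (2 * i - 1)) = (\<Prod>i\<in>{Suc l..2 * l}. 1 - XX ^ i)"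
proof (induction l)
  case 0
  then show ?case by simp
next
  case (Suc l)
  define P where "P = (\<Prod>i\<in>{Suc l..2 * l}. 1 - XX ^ i)"
  define P' where "P' = (\<Prod>i\<in>{Suc (Suc l)..2 * Suc l}. 1 - XX ^ i)"
  have A1: "(\<Prod>i\<in>{Suc l..2 * Suc l}. 1 - XX ^ i) = (1 - XX ^ Suc l) * P'"
    unfolding P'_def by (subst prod.atLeast_Suc_atMost) auto
  have A2: "(\<Prod>i\<in>{Suc l..2 * Suc l}. 1 - XX ^ i) = P * (1 - XX ^ (2 * l + 1)) * (1 - XX ^ (2 * l + 2))"
    unfolding P_def by (simp add: prod.cl_ivl_Suc)
  have sq: "XX ^ (2 * l + 2) = XX ^ Suc l * XX ^ Suc l" by (simp add: power_add[symmetric])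
  have AA: "(1 - XX ^ Suc l) * P' = P * (1 - XX ^ (2 * l + 1)) * (1 - XX ^ Suc l * XX ^ Suc l)"
    using A1 A2 unfolding sq by simp
  have "((\<Prod>i\<in>{1..Suc l}. 1 + XX ^ i) * (\<Prod>i\<in>{1..Suc l}. 1 - XX ^ (2 * i - 1))) * (1 - XX ^ Suc l)
      = (P * (1 + XX ^ Suc l) * (1 - XX ^ (2 * l + 1))) * (1 - XX ^ Suc l)"
    using Suc.IH unfolding P_def[symmetric] by (simp add: prod.cl_ivl_Suc algebra_simps)
  also have "\<dots> = P' * (1 - XX ^ Suc l)"
    using ring_aux1[OF AA] .
  finally have "((\<Prod>i\<in>{1..Suc l}. 1 + XX ^ i) * (\<Prod>i\<in>{1..Suc l}. 1 - XX ^ (2 * i - 1))) * (1 - XX ^ Suc l)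
      = P' * (1 - XX ^ Suc l)" .
  moreover have "(1 - XX ^ Suc l :: real fps) \<noteq> 0"
  proof
    assume "(1 - XX ^ Suc l :: real fps) = 0"
    then have "(1 - XX ^ Suc l :: real fps) $ 0 = 0" by simp
    then show False by simp
  qed
  ultimately show ?case unfolding P'_def by simp
qed

lemma prod_1mX_eqm: "finite I \<Longrightarrow> (\<forall>i\<in>I. M \<le> i) \<Longrightarrow> eqm M (\<Prod>i\<in>I. 1 - XX ^ i) 1"
proof (induction I rule: finite_induct)
  case empty then show ?case by simp
next
  case (insert i I)
  have h: "eqm M (\<Prod>i\<in>I. 1 - XX ^ i) 1" using insert by auto
  have "eqm M (XX ^ i * (\<Prod>i\<in>I. 1 - XX ^ i)) 0" using insert.prems by (intro eqm_Xpow) auto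
  then have "eqm M ((\<Prod>i\<in>I. 1 - XX ^ i) - XX ^ i * (\<Prod>i\<in>I. 1 - XX ^ i)) (1 - 0)"
    by (rule eqm_diff[OF h])
  then show ?case using insert.hyps by (simp add: algebra_simps)
qed

lemma Ob_En: "eqm (Suc N) (Ob N) (En N 0)"
proof -
  define Q where "Q = (\<Prod>i\<in>{1..N}. 1 - XX ^ (2 * i - 1))"
  have "Ob N * Q = (\<Prod>i\<in>{1..N}. Fu (2 * i - 1) * (1 - XX ^ (2 * i - 1)))"
    unfolding Ob_def Q_def by (simp add: prod.distrib)
  also have "\<dots> = 1" by (intro prod.neutral ballI Fu_inv) auto
  finally have O1: "Ob N * Q = 1" .
  have "En N 0 * Q = (\<Prod>i\<in>{Suc N..2 * N}. 1 - XX ^ i)"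
    unfolding En_def Q_def using euler_fin[of N] by simp
  then have "eqm (Suc N) (En N 0 * Q) 1" by (simp add: prod_1mX_eqm)
  then have "eqm (Suc N) (Ob N * Q) (En N 0 * Q)" using O1 by (simp add: eqm_def)
  moreover have "Q $ 0 \<noteq> 0" unfolding Q_def by (simp add: prod_nth0)
  ultimately show ?thesis by (rule eqm_cancel)
qed

lemma aa_0: "aa N 0 = Ob N - 1"
proof -
  have "pp 0 = (\<lambda>_. 1)" by (simp add: fun_eq_iff)
  then show ?thesis by (simp add: aa_def Psi_one)
qed

fun Rr :: "nat \<Rightarrow> real fps" where
  "Rr 0 = - XX"
| "Rr (Suc b) = (1 - XX ^ (2 * b + 2)) * (1 - XX ^ (2 * b + 3)) * (Rr b - 1) + 2 * XX ^ (2 * b + 3) * (hh b - 1) + 1"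

lemma main_eqm: "eqm (Suc N) (2 * XX * aa N b) (G N (2 * b + 2) - 1 + Rr b)"
proof (induction b)
  case 0
  have g1: "G N 1 = 2 * En N 0 - 1" using G_rec[of N 0] by simp
  have g2: "G N (2 * 0 + 2) = (XX - 1) * G N 1 + 2 * En N 0 - XX ^ Suc N"
    using G_rec[of N 1] by (simp add: numeral_2_eq_2)
  have z: "eqm (Suc N) (XX ^ Suc N * 1) 0" by (rule eqm_Xpow) simp
  show ?case
    apply (rule eqm_comb[where ka="2 * XX" and kb=1 and kc=0, OF Ob_En z eqm_refl[of _ 0]])
    unfolding aa_0 g2 g1 Rr.simps by algebra
next
  case (Suc b)
  define y where "y = XX ^ (2 * b + 2)"
  have e1: "2 * b + 3 = (2 * b + 2) + 1" by simp
  have y1: "XX ^ (2 * b + 3) = y * XX" unfolding y_def by (simp only: e1 power_add power_one_right)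
  have c1: "cc b = 1 + XX - y * XX" unfolding cc_def y1 ..
  have es: "2 * Suc b + 2 = Suc (Suc (2 * b + 2))" by simp
  define z1 where "z1 = XX ^ (Suc (2 * b + 2) * Suc N)"
  define z2 where "z2 = XX ^ ((2 * b + 2) * Suc N)"
  have y2: "XX ^ Suc (2 * b + 2) = y * XX" unfolding y_def by (simp only: power_Suc2)
  have G4: "G N (2 * Suc b + 2) = (y * XX - 1) * ((y - 1) * G N (2 * b + 2) + 2 * En N 0 - z2) + 2 * En N 0 - z1"
    unfolding es G_rec[of N "Suc (2 * b + 2)"] G_rec[of N "2 * b + 2"] z1_def[symmetric] z2_def[symmetric] y2 y_def[symmetric] ..
  have Z1: "eqm (Suc N) (XX ^ (Suc (2 * b + 2) * Suc N) * 1) 0" by (rule eqm_Xpow) simp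
  have Z2: "eqm (Suc N) (XX ^ ((2 * b + 2) * Suc N) * 1) 0" by (rule eqm_Xpow) simp
  have CL: "eqm (Suc N) (cc b * aa N b - dd N b) (aa N 0 + hh b)"
    by (rule eqm_mono[OF claim]) simp
  show ?case
    apply (rule eqm_comb5[where ka="(1 - y) * (1 - y * XX)" and kb="2 * XX * y" and kc="2 * XX * y"
          and kd="1" and ke="y * XX - 1", OF Suc.IH Ob_En CL Z1[unfolded mult_1_right] Z2[unfolded mult_1_right]])
    unfolding aa_Suc G4 c1 aa_0 Rr.simps y1 y_def[symmetric] z1_def[symmetric] z2_def[symmetric]
    by algebra
qed


lemma lowdeg_uminus: "lowdeg d f \<Longrightarrow> lowdeg d (- f)" by (simp add: lowdeg_def)
lemma lowdeg_1m: "lowdeg m (1 - XX ^ m)"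
  by (rule lowdeg_diff[OF lowdeg_mono[OF lowdeg_one] lowdeg_Xpow]) simp
lemma lowdeg_m1: "lowdeg d f \<Longrightarrow> lowdeg d (f - 1)"
  by (rule lowdeg_diff) (auto intro: lowdeg_mono[OF lowdeg_one])
lemma lowdeg_p1: "lowdeg d f \<Longrightarrow> lowdeg d (f + 1)"
  by (rule lowdeg_add) (auto intro: lowdeg_mono[OF lowdeg_one])

lemma lowdeg_pp1: "lowdeg (b * b + 3 * b) (pp b 1)"
proof (induction b)
  case 0 then show ?case by (simp add: lowdeg_one)
next
  case (Suc b)
  have ex: "(2 * b + 2) + 2 * 1 = 2 * b + 4" by simp
  have "XX ^ (2 * b + 2) * XX ^ (2 * 1) = XX ^ (2 * b + 4)" by (simp only: power_add[symmetric] ex)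
  then have f: "lowdeg (2 * b + 4) (1 - XX ^ (2 * b + 2) * XX ^ (2 * 1))" by (simp add: lowdeg_1m)
  have "lowdeg (b * b + 3 * b + (2 * b + 4)) (pp (Suc b) 1)"
    unfolding pp_Suc by (rule lowdeg_mult[OF Suc.IH f])
  then show ?case by (rule lowdeg_mono) simp
qed

lemma lowdeg_hh: "lowdeg (b * b + 3 * b + 2) (hh b)"
proof (induction b)
  case 0 then show ?case using lowdeg_Xpow[of 2] by (simp add: numeral_2_eq_2)
next
  case (Suc b)
  have t: "lowdeg (2 * b + 4 + 2 + (b * b + 3 * b)) (XX ^ (2 * b + 4) * (1 - XX ^ 2) * pp b 1)"
    by (intro lowdeg_mult lowdeg_Xpow lowdeg_1m lowdeg_pp1)
  show ?case unfolding hh.simps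
    by (rule lowdeg_add; rule lowdeg_mono[OF Suc.IH] lowdeg_mono[OF t]) simp_all
qed

lemma lowdeg_Rr: "lowdeg (2 * b * b + 3 * b + 1) (Rr b)"
proof (induction b)
  case 0 then show ?case using lowdeg_uminus[OF lowdeg_X] by simp
next
  case (Suc b)
  have t1: "lowdeg ((2 * b + 2) + (2 * b + 3) + (2 * b * b + 3 * b + 1))
      ((1 - XX ^ (2 * b + 2)) * (1 - XX ^ (2 * b + 3)) * (Rr b - 1))"
    by (intro lowdeg_mult lowdeg_1m lowdeg_m1 Suc.IH)
  have t2: "lowdeg (0 + (2 * b + 3) + (b * b + 3 * b + 2)) (2 * XX ^ (2 * b + 3) * (hh b - 1))"
    by (intro lowdeg_mult lowdeg_numeral lowdeg_Xpow lowdeg_m1 lowdeg_hh)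
  show ?case unfolding Rr.simps
    by (rule lowdeg_p1, rule lowdeg_add; rule lowdeg_mono[OF t1] lowdeg_mono[OF t2]) simp_all
qed

lemma core:
  assumes k: "k \<ge> 1" and n: "k * (2 * k - 1) \<le> n"
  shows "2 * (aa (Suc n) (k - 1)) $ n = (G (Suc n) (2 * k)) $ Suc n"
proof -
  have e: "2 * (k - 1) + 2 = 2 * k" using k by simp
  have M: "eqm (Suc (Suc n)) (2 * XX * aa (Suc n) (k - 1)) (G (Suc n) (2 * k) - 1 + Rr (k - 1))"
    using main_eqm[of "Suc n" "k - 1"] unfolding e .
  have "(2 * XX * aa (Suc n) (k - 1)) $ Suc n = (G (Suc n) (2 * k) - 1 + Rr (k - 1)) $ Suc n"
    by (rule eqm_nth[OF M]) simp
  moreover have "(Rr (k - 1)) $ Suc n = 0"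
  proof -
    have d: "2 * (k - 1) * (k - 1) + 3 * (k - 1) + 1 = k * (2 * k - 1)"
      using k by (cases k) (auto simp: algebra_simps)
    show ?thesis using lowdeg_Rr[of "k - 1"] n unfolding d lowdeg_def by simp
  qed
  moreover have "(2 * XX * aa (Suc n) (k - 1)) $ Suc n = 2 * (aa (Suc n) (k - 1)) $ n"
    by (simp add: numeral_fps_const mult.assoc fps_X_mult_nth)
  ultimately show ?thesis by simp
qed


lemma cnt: "finite V \<Longrightarrow> 0 \<notin> V \<Longrightarrow> (\<Sum>p\<in>msS V M n. wt \<sigma> p) = (\<Prod>i\<in>V. fac (M i) (\<sigma> i) i) $ n"
  using count_main by metis

lemma cnt1: "finite V \<Longrightarrow> 0 \<notin> V \<Longrightarrow> real (card (msS V M n)) = (\<Prod>i\<in>V. fac (M i) 1 i) $ n"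
  using cnt[where \<sigma>="\<lambda>_. 1"] by (simp add: sum_wt_one)

lemma fin_msS: "finite V \<Longrightarrow> 0 \<notin> V \<Longrightarrow> finite (msS V M n)"
  using count_main by metis

lemma fac01_1: "i > 0 \<Longrightarrow> fac {0,1} 1 i = 1 + XX ^ i"
  using fac_01[of i 1] by simp

lemma fac01_m1: "i > 0 \<Longrightarrow> fac {0,1} (-1) i = 1 - XX ^ i"
proof -
  assume "i > 0"
  then have "fac {0,1} (-1) i = 1 + fps_const (-1) * XX ^ i" by (rule fac_01)
  also have "\<dots> = 1 - XX ^ i" by (simp add: fps_const_neg[symmetric])
  finally show ?thesis .
qed

lemma En_fac: "(\<Prod>i\<in>{Suc m..N}. fac {0,1} 1 i) = En N m"
  unfolding En_def by (rule prod.cong[OF refl], rule fac01_1) simp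

lemma En_fac': "(\<forall>i\<in>{Suc m..N}. M i = {0,1}) \<Longrightarrow> (\<Prod>i\<in>{Suc m..N}. fac (M i) 1 i) = En N m"
  by (subst En_fac[symmetric]) (rule prod.cong, auto)


lemma sum_fibers:
  assumes "\<And>x. x \<in> S \<Longrightarrow> g x \<in> T" "finite T" "\<And>y. y \<in> T \<Longrightarrow> finite {x\<in>S. g x = y}"
  shows "finite S" "sum h S = (\<Sum>y\<in>T. sum h {x\<in>S. g x = y})"
proof -
  have S: "S = (\<Union>y\<in>T. {x\<in>S. g x = y})" using assms(1) by auto
  have "finite (\<Union>y\<in>T. {x\<in>S. g x = y})" using assms(2,3) by blast
  then show "finite S" using S by simp
  have "sum h S = sum h (\<Union>y\<in>T. {x\<in>S. g x = y})" by (rule arg_cong[OF S])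
  also have "\<dots> = (\<Sum>y\<in>T. sum h {x\<in>S. g x = y})"
    by (rule sum.UNION_disjoint) (use assms in auto)
  finally show "sum h S = (\<Sum>y\<in>T. sum h {x\<in>S. g x = y})" .
qed

lemma Min_mem: "p \<noteq> {#} \<Longrightarrow> Min (set_mset p) \<in># p"
  by (simp add: Min_in)
lemma Min_lem: "x \<in># p \<Longrightarrow> Min (set_mset p) \<le> x"
  by (simp add: Min_le)

definition Dset :: "nat \<Rightarrow> nat \<Rightarrow> nat multiset set" where
  "Dset j t = {p :: nat multiset. p \<noteq> {#} \<and> sum_mset p = t \<and>
     count p (Min (set_mset p)) = j \<and>
     (\<forall>x. x \<noteq> Min (set_mset p) \<longrightarrow> count p x \<le> 1)}"

lemma D_Dset: "D j t = card (Dset j t)" by (simp add: D_def Dset_def)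

lemma D_fiberm:
  assumes j: "j \<ge> 1" and m: "1 \<le> m" and t: "t \<le> N" and mN: "m \<le> N"
  shows "{p\<in>Dset j t. Min (set_mset p) = m} = msS {m..N} (\<lambda>i. if i = m then {j} else {0,1}) t"
proof (intro set_eqI iffI)
  fix p assume p: "p \<in> {p\<in>Dset j t. Min (set_mset p) = m}"
  then have ne: "p \<noteq> {#}" and sp: "sum_mset p = t" and cm: "count p m = j"
    and o: "\<And>x. x \<noteq> m \<Longrightarrow> count p x \<le> 1" and mn: "Min (set_mset p) = m"
    by (auto simp: Dset_def)
  have "set_mset p \<subseteq> {m..N}"
  proof
    fix x assume x: "x \<in> set_mset p"
    then have "m \<le> x" using Min_lem[of x p] mn by simp
    moreover have "x \<le> N" using mem_le_sum[of x p] x sp t by simp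
    ultimately show "x \<in> {m..N}" by simp
  qed
  moreover have "\<forall>i\<in>{m..N}. count p i \<in> (if i = m then {j} else {0,1})"
    using cm o by (auto simp: le_Suc_eq)
  ultimately show "p \<in> msS {m..N} (\<lambda>i. if i = m then {j} else {0,1}) t"
    using sp by (simp add: msS_def)
next
  fix p assume p: "p \<in> msS {m..N} (\<lambda>i. if i = m then {j} else {0,1}) t"
  then have sub: "set_mset p \<subseteq> {m..N}" and sp: "sum_mset p = t"
    and c: "\<forall>i\<in>{m..N}. count p i \<in> (if i = m then {j} else {0,1})"
    by (auto simp: msS_def)
  have cm: "count p m = j" using bspec[OF c, of m] mN m by simp
  then have mp: "m \<in># p" using j count_greater_zero_iff[of p m] by simp
  then have ne: "p \<noteq> {#}" by auto
  have mn: "Min (set_mset p) = m"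
    by (rule Min_eqI) (use sub mp in auto)
  have o: "\<forall>x. x \<noteq> m \<longrightarrow> count p x \<le> 1"
  proof (intro allI impI)
    fix x assume "x \<noteq> m"
    show "count p x \<le> 1"
    proof (cases "x \<in># p")
      case True then have "x \<in> {m..N}" using sub by auto
      then have "count p x \<in> {0,1}" using bspec[OF c, of x] \<open>x \<noteq> m\<close> by simp
      then show ?thesis by auto
    next
      case False then show ?thesis by (simp add: not_in_iff)
    qed
  qed
  show "p \<in> {p\<in>Dset j t. Min (set_mset p) = m}"
    using ne sp cm o mn by (simp add: Dset_def)
qed

lemma D_fiber0:
  assumes j: "j \<ge> 1" and t: "t \<le> N"
  shows "{p\<in>Dset j t. Min (set_mset p) = 0} = (\<lambda>r. replicate_mset j 0 + r) ` msS {1..N} (\<lambda>_. {0,1}) t"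
proof (intro set_eqI iffI)
  fix p assume p: "p \<in> {p\<in>Dset j t. Min (set_mset p) = 0}"
  then have ne: "p \<noteq> {#}" and sp: "sum_mset p = t" and cm: "count p 0 = j"
    and o: "\<And>x. x \<noteq> 0 \<Longrightarrow> count p x \<le> 1"
    by (auto simp: Dset_def)
  define r where "r = filter_mset (\<lambda>x. x \<noteq> 0) p"
  have pr: "p = replicate_mset j 0 + r"
    unfolding r_def using multiset_partition[of p "\<lambda>x. x = 0"] cm
    by (simp add: filter_eq_replicate_mset)
  have sr: "sum_mset r = t" using sp pr by simp
  have "set_mset r \<subseteq> {1..N}"
  proof
    fix x assume x: "x \<in> set_mset r"
    then have "x \<noteq> 0" by (simp add: r_def)
    moreover have "x \<le> N" using mem_le_sum[of x r] x sr t by simp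
    ultimately show "x \<in> {1..N}" by simp
  qed
  moreover have "\<forall>i\<in>{1..N}. count r i \<in> {0,1}"
    using o by (auto simp: r_def le_Suc_eq)
  ultimately have "r \<in> msS {1..N} (\<lambda>_. {0,1}) t" using sr by (simp add: msS_def)
  then show "p \<in> (\<lambda>r. replicate_mset j 0 + r) ` msS {1..N} (\<lambda>_. {0,1}) t"
    using pr by blast
next
  fix p assume "p \<in> (\<lambda>r. replicate_mset j 0 + r) ` msS {1..N} (\<lambda>_. {0,1}) t"
  then obtain r where pr: "p = replicate_mset j 0 + r" and r: "r \<in> msS {1..N} (\<lambda>_. {0,1}) t"
    by blast
  have sub: "set_mset r \<subseteq> {1..N}" and sr: "sum_mset r = t"
    and c: "\<forall>i\<in>{1..N}. count r i \<in> {0,1}" using r by (auto simp: msS_def)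
  have r0: "count r 0 = 0" using sub by (auto simp: count_eq_zero_iff)
  have mp: "0 \<in># p" using j pr by simp
  then have ne: "p \<noteq> {#}" by auto
  have mn: "Min (set_mset p) = 0"
    by (rule Min_eqI) (use mp in auto)
  have cm: "count p 0 = j" using pr r0 by simp
  have o: "\<forall>x. x \<noteq> 0 \<longrightarrow> count p x \<le> 1"
  proof (intro allI impI)
    fix x :: nat assume x0: "x \<noteq> 0"
    have cx: "count p x = count r x" using pr x0 by simp
    show "count p x \<le> 1"
    proof (cases "x \<in># r")
      case True then have "x \<in> {1..N}" using sub by auto
      then have "count r x \<in> {0,1}" using c by blast
      then show ?thesis using cx by auto
    next
      case False then show ?thesis using cx by (simp add: not_in_iff)
    qed
  qed
  have "sum_mset p = t" using pr sr by simp
  then show "p \<in> {p\<in>Dset j t. Min (set_mset p) = 0}"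
    using ne cm o mn by (simp add: Dset_def)
qed


lemma fiber0_card:
  assumes j: "j \<ge> 1" and t: "t \<le> N"
  shows "real (card {p\<in>Dset j t. Min (set_mset p) = 0}) = (XX ^ (j * 0) * En N 0) $ t"
proof -
  have inj: "inj_on (\<lambda>r. replicate_mset j 0 + r) (msS {1..N} (\<lambda>_. {0,1}) t)"
    by (rule inj_onI) simp
  have "real (card {p\<in>Dset j t. Min (set_mset p) = 0}) = real (card (msS {1..N} (\<lambda>_. {0,1}) t))"
    unfolding D_fiber0[OF j t] card_image[OF inj] ..
  also have "\<dots> = (\<Prod>i\<in>{Suc 0..N}. fac {0,1} 1 i) $ t"
    by (subst cnt1) auto
  also have "\<dots> = (En N 0) $ t" by (simp only: En_fac)
  finally show ?thesis by simp
qed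

lemma fiberm_card:
  assumes j: "j \<ge> 1" and m: "1 \<le> m" and t: "t \<le> N" and mN: "m \<le> N"
  shows "real (card {p\<in>Dset j t. Min (set_mset p) = m}) = (XX ^ (j * m) * En N m) $ t"
proof -
  have "real (card {p\<in>Dset j t. Min (set_mset p) = m}) =
      (\<Prod>i\<in>{m..N}. fac (if i = m then {j} else {0,1}) 1 i) $ t"
    unfolding D_fiberm[OF j m t mN] using m by (subst cnt1) auto
  also have "(\<Prod>i\<in>{m..N}. fac (if i = m then {j} else {0,1}) 1 i) =
      fac {j} 1 m * (\<Prod>i\<in>{Suc m..N}. fac (if i = m then {j} else {0,1}) 1 i)"
    using mN by (subst prod.atLeast_Suc_atMost) auto
  also have "(\<Prod>i\<in>{Suc m..N}. fac (if i = m then {j} else {0,1}) 1 i) = En N m"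
    by (rule En_fac') auto
  also have "fac {j} 1 m = XX ^ (j * m)" using m by (simp add: fac_single mult.commute)
  finally show ?thesis .
qed

lemma D_count:
  assumes j: "j \<ge> 1" and t: "t \<le> N"
  shows "real (D j t) = (G N j) $ t"
proof -
  let ?S = "Dset j t"
  let ?g = "\<lambda>p. Min (set_mset p)"
  have g: "?g p \<in> {0..N}" if "p \<in> ?S" for p
  proof -
    have "p \<noteq> {#}" "sum_mset p = t" using that by (auto simp: Dset_def)
    then show ?thesis using mem_le_sum[OF Min_mem[of p]] t by simp
  qed
  have fin: "finite {p\<in>?S. ?g p = m}" if "m \<in> {0..N}" for m
  proof (cases "m = 0")
    case True
    then show ?thesis unfolding True D_fiber0[OF j t] by (intro finite_imageI fin_msS) auto
  next
    case False
    then have m1: "1 \<le> m" and mN: "m \<le> N" using that by auto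
    show ?thesis unfolding D_fiberm[OF j m1 t mN] using m1 by (intro fin_msS) auto
  qed
  have "real (D j t) = (\<Sum>p\<in>?S. 1)" by (simp add: D_Dset)
  also have "\<dots> = (\<Sum>m\<in>{0..N}. \<Sum>p\<in>{p\<in>?S. ?g p = m}. 1)"
    by (rule sum_fibers(2)[of ?S ?g]) (use g fin in auto)
  also have "\<dots> = (\<Sum>m\<in>{0..N}. (XX ^ (j * m) * En N m) $ t)"
  proof (rule sum.cong[OF refl])
    fix m assume m: "m \<in> {0..N}"
    show "(\<Sum>p\<in>{p\<in>?S. ?g p = m}. 1) = (XX ^ (j * m) * En N m) $ t"
    proof (cases "m = 0")
      case True then show ?thesis using fiber0_card[OF j t] by simp
    next
      case False then show ?thesis using fiberm_card[OF j _ t, of m] m by simp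
    qed
  qed
  also have "\<dots> = (G N j) $ t" by (simp add: G_def fps_sum_nth)
  finally show ?thesis .
qed


lemma fac01_eq: "i > 0 \<Longrightarrow> M i = {0,1} \<Longrightarrow> fac (M i) 1 i = 1 + XX ^ i"
  using fac01_1 by simp

lemma P1_set: "n \<le> N \<Longrightarrow> {p. parts_pos p \<and> sum_mset p = n \<and> distinct_parts p \<and> (\<forall>x\<in>#p. x > 1)}
   = msS {2..N} (\<lambda>_. {0,1}) n"
proof (intro set_eqI iffI)
  fix p assume nN: "n \<le> N" and p: "p \<in> {p. parts_pos p \<and> sum_mset p = n \<and> distinct_parts p \<and> (\<forall>x\<in>#p. x > 1)}"
  then have sp: "sum_mset p = n" and d: "\<And>x. count p x \<le> 1" and g: "\<And>x. x \<in># p \<Longrightarrow> x > 1"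
    by (auto simp: distinct_parts_def)
  have "set_mset p \<subseteq> {2..N}" using g mem_le_sum[of _ p] sp nN by fastforce
  moreover have "\<forall>i\<in>{2..N}. count p i \<in> {0,1}" using d by (auto simp: le_Suc_eq)
  ultimately show "p \<in> msS {2..N} (\<lambda>_. {0,1}) n" using sp by (simp add: msS_def)
next
  fix p assume p: "p \<in> msS {2..N} (\<lambda>_. {0,1}) n"
  then have sub: "set_mset p \<subseteq> {2..N}" and sp: "sum_mset p = n"
    and c: "\<forall>i\<in>{2..N}. count p i \<in> {0,1}" by (auto simp: msS_def)
  have d: "count p x \<le> 1" for x
  proof (cases "x \<in># p")
    case True then have "x \<in> {2..N}" using sub by auto
    then have "count p x \<in> {0,1}" using c by blast
    then show ?thesis by auto
  next
    case False then show ?thesis by (simp add: not_in_iff)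
  qed
  show "p \<in> {p. parts_pos p \<and> sum_mset p = n \<and> distinct_parts p \<and> (\<forall>x\<in>#p. x > 1)}"
    using sub sp d by (auto simp: parts_pos_def distinct_parts_def)
qed

lemma P1_count: "n \<le> N \<Longrightarrow> real (P1 n) = (En N 1) $ n"
proof -
  assume nN: "n \<le> N"
  have "real (P1 n) = real (card (msS {2..N} (\<lambda>_. {0,1}) n))"
    unfolding P1_def P1_set[OF nN] ..
  also have "\<dots> = (\<Prod>i\<in>{Suc 1..N}. fac {0,1} 1 i) $ n" by (subst cnt1) (auto simp: numeral_2_eq_2)
  also have "\<dots> = (En N 1) $ n" by (simp only: En_fac)
  finally show ?thesis .
qed

lemma Pp_set:
  assumes m: "m \<ge> 1" and nN: "n \<le> N" and N1: "1 \<le> N"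
  shows "{p. parts_pos p \<and> sum_mset p = n \<and> count p 1 = m \<and>
     Min (set_mset p) = 1 \<and> (\<forall>x. x \<noteq> 1 \<longrightarrow> count p x \<le> 1)}
   = msS {1..N} (\<lambda>i. if i = 1 then {m} else {0,1}) n"
proof (intro set_eqI iffI)
  fix p assume p: "p \<in> {p. parts_pos p \<and> sum_mset p = n \<and> count p 1 = m \<and>
     Min (set_mset p) = 1 \<and> (\<forall>x. x \<noteq> 1 \<longrightarrow> count p x \<le> 1)}"
  then have sp: "sum_mset p = n" and c1: "count p 1 = m" and d: "\<And>x. x \<noteq> 1 \<Longrightarrow> count p x \<le> 1"
    and g: "\<And>x. x \<in># p \<Longrightarrow> x > 0"
    by (auto simp: parts_pos_def)
  have "set_mset p \<subseteq> {1..N}" using g mem_le_sum[of _ p] sp nN by fastforce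
  moreover have "\<forall>i\<in>{1..N}. count p i \<in> (if i = 1 then {m} else {0,1})" using d c1 by (auto simp: le_Suc_eq)
  ultimately show "p \<in> msS {1..N} (\<lambda>i. if i = 1 then {m} else {0,1}) n" using sp by (simp add: msS_def)
next
  fix p assume p: "p \<in> msS {1..N} (\<lambda>i. if i = 1 then {m} else {0,1}) n"
  then have sub: "set_mset p \<subseteq> {1..N}" and sp: "sum_mset p = n"
    and c: "\<forall>i\<in>{1..N}. count p i \<in> (if i = 1 then {m} else {0,1})" by (auto simp: msS_def)
  have c1: "count p 1 = m" using bspec[OF c, of 1] N1 by simp
  then have mp: "1 \<in># p" using m count_greater_zero_iff[of p 1] by simp
  have pos: "\<And>x. x \<in># p \<Longrightarrow> x > 0" using sub by fastforce
  have mn: "Min (set_mset p) = 1"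
    by (rule Min_eqI) (use mp pos in \<open>auto simp: Suc_le_eq\<close>)
  have d: "count p x \<le> 1" if "x \<noteq> 1" for x
  proof (cases "x \<in># p")
    case True then have "x \<in> {1..N}" using sub by auto
    then have "count p x \<in> {0,1}" using bspec[OF c, of x] that by simp
    then show ?thesis by auto
  next
    case False then show ?thesis by (simp add: not_in_iff)
  qed
  show "p \<in> {p. parts_pos p \<and> sum_mset p = n \<and> count p 1 = m \<and>
     Min (set_mset p) = 1 \<and> (\<forall>x. x \<noteq> 1 \<longrightarrow> count p x \<le> 1)}"
    using pos sp c1 mn d by (simp add: parts_pos_def)
qed

lemma Pp_count:
  assumes m: "m \<ge> 1" and nN: "n \<le> N" and N1: "1 \<le> N"
  shows "real (Pprime m n) = (XX ^ m * En N 1) $ n"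
proof -
  have "real (Pprime m n) = real (card (msS {1..N} (\<lambda>i. if i = 1 then {m} else {0,1}) n))"
    unfolding Pprime_def Pp_set[OF m nN N1] ..
  also have "\<dots> = (\<Prod>i\<in>{1..N}. fac (if i = 1 then {m} else {0,1}) 1 i) $ n" by (subst cnt1) auto
  also have "(\<Prod>i\<in>{1..N}. fac (if i = 1 then {m} else {0,1}) 1 i) =
      fac {m} 1 1 * (\<Prod>i\<in>{Suc 1..N}. fac (if i = 1 then {m} else {0,1}) 1 i)"
    using N1 by (subst prod.atLeast_Suc_atMost) auto
  also have "(\<Prod>i\<in>{Suc 1..N}. fac (if i = 1 then {m} else {0,1}) 1 i) = En N 1"
    by (rule En_fac') auto
  also have "fac {m} 1 1 = XX ^ m" by (simp add: fac_single)
  finally show ?thesis .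
qed


definition P2set :: "nat \<Rightarrow> nat multiset set" where
  "P2set n = {p. parts_pos p \<and> sum_mset p = n \<and> distinct_parts p \<and>
     (\<forall>x\<in>#p. x \<noteq> Min (set_mset p) \<longrightarrow> x \<ge> Min (set_mset p) + 2)}"

lemma P2_fiber:
  assumes n1: "n \<ge> 1" and s1: "1 \<le> s" and nN: "n \<le> N"
  shows "{p\<in>P2set n. Min (set_mset p) = s} = msS (insert s {Suc (Suc s)..N}) (\<lambda>i. if i = s then {1} else {0,1}) n"
proof (intro set_eqI iffI)
  fix p assume p: "p \<in> {p\<in>P2set n. Min (set_mset p) = s}"
  then have sp: "sum_mset p = n" and d: "\<And>x. count p x \<le> 1" and mn: "Min (set_mset p) = s"
    and g: "\<And>x. x \<in># p \<Longrightarrow> x \<noteq> s \<Longrightarrow> x \<ge> s + 2"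
    by (auto simp: P2set_def distinct_parts_def)
  have ne: "p \<noteq> {#}" using sp n1 by auto
  have sp': "s \<in># p" using Min_mem[OF ne] mn by simp
  have "count p s > 0" using sp' by simp
  then have cs: "count p s = 1" using d[of s] by linarith
  have "set_mset p \<subseteq> insert s {Suc (Suc s)..N}"
  proof
    fix x assume x: "x \<in> set_mset p"
    then have "x \<le> N" using mem_le_sum[of x p] sp nN by simp
    then show "x \<in> insert s {Suc (Suc s)..N}" using g[of x] x by auto
  qed
  moreover have "\<forall>i\<in>insert s {Suc (Suc s)..N}. count p i \<in> (if i = s then {1} else {0,1})"
    using d cs by (auto simp: le_Suc_eq)
  ultimately show "p \<in> msS (insert s {Suc (Suc s)..N}) (\<lambda>i. if i = s then {1} else {0,1}) n"
    using sp by (simp add: msS_def)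
next
  fix p assume p: "p \<in> msS (insert s {Suc (Suc s)..N}) (\<lambda>i. if i = s then {1} else {0,1}) n"
  then have sub: "set_mset p \<subseteq> insert s {Suc (Suc s)..N}" and sp: "sum_mset p = n"
    and c: "\<forall>i\<in>insert s {Suc (Suc s)..N}. count p i \<in> (if i = s then {1} else {0,1})"
    by (auto simp: msS_def)
  have cs: "count p s = 1" using bspec[OF c, of s] by simp
  then have sp': "s \<in># p" using count_greater_zero_iff[of p s] by simp
  have ge: "\<And>x. x \<in># p \<Longrightarrow> s \<le> x" using sub by fastforce
  have mn: "Min (set_mset p) = s" by (rule Min_eqI) (use sp' ge in auto)
  have d: "count p x \<le> 1" for x
  proof (cases "x \<in># p")
    case True then have "x \<in> insert s {Suc (Suc s)..N}" using sub by auto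
    then have "count p x \<in> (if x = s then {1} else {0,1})" using c by blast
    then show ?thesis by (auto split: if_splits)
  next
    case False then show ?thesis by (simp add: not_in_iff)
  qed
  have pos: "\<And>x. x \<in># p \<Longrightarrow> x > 0" using ge s1 by fastforce
  have g: "\<And>x. x \<in># p \<Longrightarrow> x \<noteq> s \<Longrightarrow> x \<ge> s + 2" using sub by fastforce
  show "p \<in> {p\<in>P2set n. Min (set_mset p) = s}"
    using pos sp d mn g by (auto simp: P2set_def parts_pos_def distinct_parts_def)
qed

lemma P2_count:
  assumes n1: "n \<ge> 1" and nN: "n < N"
  shows "real (P2 n) = (\<Sum>s\<in>{1..n}. (XX ^ s * En N (Suc s)) $ n)"
proof -
  let ?S = "P2set n"
  let ?g = "\<lambda>p. Min (set_mset p)"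
  have g: "?g p \<in> {1..n}" if "p \<in> ?S" for p
  proof -
    have sp: "sum_mset p = n" and pos: "parts_pos p" using that by (auto simp: P2set_def)
    then have ne: "p \<noteq> {#}" using n1 by auto
    then have "?g p \<in># p" by (rule Min_mem)
    then show ?thesis using mem_le_sum[of "?g p" p] sp pos by (auto simp: parts_pos_def Suc_le_eq)
  qed
  have fin: "finite {p\<in>?S. ?g p = s}" if "s \<in> {1..n}" for s
  proof -
    have s1: "1 \<le> s" using that by simp
    show ?thesis unfolding P2_fiber[OF n1 s1 less_imp_le[OF nN]] using s1 by (intro fin_msS) auto
  qed
  have "real (P2 n) = (\<Sum>p\<in>?S. 1)" by (simp add: P2_def P2set_def)
  also have "\<dots> = (\<Sum>s\<in>{1..n}. \<Sum>p\<in>{p\<in>?S. ?g p = s}. 1)"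
    by (rule sum_fibers(2)[of ?S ?g]) (use g fin in auto)
  also have "\<dots> = (\<Sum>s\<in>{1..n}. (XX ^ s * En N (Suc s)) $ n)"
  proof (rule sum.cong[OF refl])
    fix s assume s: "s \<in> {1..n}"
    then have s1: "1 \<le> s" by simp
    have "(\<Sum>p\<in>{p\<in>?S. ?g p = s}. 1) = real (card (msS (insert s {Suc (Suc s)..N}) (\<lambda>i. if i = s then {1} else {0,1}) n))"
      unfolding P2_fiber[OF n1 s1 less_imp_le[OF nN]] by simp
    also have "\<dots> = (\<Prod>i\<in>insert s {Suc (Suc s)..N}. fac (if i = s then {1} else {0,1}) 1 i) $ n"
      using s1 by (subst cnt1) auto
    also have "(\<Prod>i\<in>insert s {Suc (Suc s)..N}. fac (if i = s then {1} else {0,1}) 1 i)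
        = fac {1} 1 s * (\<Prod>i\<in>{Suc (Suc s)..N}. fac (if i = s then {1} else {0,1}) 1 i)"
      by (subst prod.insert) auto
    also have "(\<Prod>i\<in>{Suc (Suc s)..N}. fac (if i = s then {1} else {0,1}) 1 i) = En N (Suc s)"
      by (rule En_fac') auto
    also have "fac {1} 1 s = XX ^ s" using s1 fac_single[of s 1] by simp
    finally show "(\<Sum>p\<in>{p\<in>?S. ?g p = s}. 1) = (XX ^ s * En N (Suc s)) $ n" .
  qed
  finally show ?thesis .
qed

definition Pdset :: "nat \<Rightarrow> nat \<Rightarrow> nat multiset set" where
  "Pdset m n = {p. parts_pos p \<and> sum_mset p = n \<and>
     (\<exists>s. count p s = 1 \<and> count p (s + 1) = m \<and> (\<forall>x\<in>#p. s \<le> x) \<and>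
          (\<forall>x. x \<noteq> s + 1 \<longrightarrow> count p x \<le> 1))}"

lemma Pd_fiber:
  assumes m1: "m \<ge> 1" and s1: "1 \<le> s" and sN: "Suc s \<le> N" and nN: "n \<le> N"
  shows "{p\<in>Pdset m n. Min (set_mset p) = s} =
    msS {s..N} (\<lambda>i. if i = s then {1} else if i = Suc s then {m} else {0,1}) n"
proof (intro set_eqI iffI)
  fix p assume p: "p \<in> {p\<in>Pdset m n. Min (set_mset p) = s}"
  then have sp: "sum_mset p = n" and mn: "Min (set_mset p) = s" by (auto simp: Pdset_def)
  from p obtain s' where c1: "count p s' = 1" and c2: "count p (s' + 1) = m" and ge: "\<forall>x\<in>#p. s' \<le> x"
    and d: "\<forall>x. x \<noteq> s' + 1 \<longrightarrow> count p x \<le> 1" by (auto simp: Pdset_def)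
  have s'p: "s' \<in># p" using c1 count_greater_zero_iff[of p s'] by simp
  have "Min (set_mset p) = s'" by (rule Min_eqI) (use s'p ge in auto)
  then have ss: "s' = s" using mn by simp
  have "set_mset p \<subseteq> {s..N}"
  proof
    fix x assume x: "x \<in> set_mset p"
    then have "x \<le> N" using mem_le_sum[of x p] sp nN by simp
    then show "x \<in> {s..N}" using ge x ss by auto
  qed
  moreover have "\<forall>i\<in>{s..N}. count p i \<in> (if i = s then {1} else if i = Suc s then {m} else {0,1})"
    using d c1 c2 ss by (auto simp: le_Suc_eq)
  ultimately show "p \<in> msS {s..N} (\<lambda>i. if i = s then {1} else if i = Suc s then {m} else {0,1}) n"
    using sp by (simp add: msS_def)
next
  fix p assume p: "p \<in> msS {s..N} (\<lambda>i. if i = s then {1} else if i = Suc s then {m} else {0,1}) n"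
  then have sub: "set_mset p \<subseteq> {s..N}" and sp: "sum_mset p = n"
    and c: "\<forall>i\<in>{s..N}. count p i \<in> (if i = s then {1} else if i = Suc s then {m} else {0,1})"
    by (auto simp: msS_def)
  have c1: "count p s = 1" using bspec[OF c, of s] sN by simp
  have c2: "count p (s + 1) = m" using bspec[OF c, of "Suc s"] sN by simp
  have sp': "s \<in># p" using c1 count_greater_zero_iff[of p s] by simp
  have ge: "\<forall>x\<in>#p. s \<le> x" using sub by fastforce
  have mn: "Min (set_mset p) = s" by (rule Min_eqI) (use sp' ge in auto)
  have d: "count p x \<le> 1" if "x \<noteq> s + 1" for x
  proof (cases "x \<in># p")
    case True then have "x \<in> {s..N}" using sub by auto
    then have "count p x \<in> (if x = s then {1} else if x = Suc s then {m} else {0,1})" using c by blast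
    then show ?thesis using that by (auto split: if_splits)
  next
    case False then show ?thesis by (simp add: not_in_iff)
  qed
  have pos: "\<And>x. x \<in># p \<Longrightarrow> x > 0" using ge s1 by fastforce
  have "p \<in> Pdset m n"
    unfolding Pdset_def using pos sp c1 c2 ge d by (auto simp: parts_pos_def)
  then show "p \<in> {p\<in>Pdset m n. Min (set_mset p) = s}" using mn by simp
qed

lemma Pd_count:
  assumes m1: "m \<ge> 1" and nN: "n < N"
  shows "real (Pdprime m n) = (\<Sum>s\<in>{1..n}. (XX ^ s * XX ^ (Suc s * m) * En N (Suc s)) $ n)"
proof -
  let ?S = "Pdset m n"
  let ?g = "\<lambda>p. Min (set_mset p)"
  let ?M = "\<lambda>s i. if i = s then {1} else if i = Suc s then {m} else {0::nat,1}"
  have g: "?g p \<in> {1..n}" if "p \<in> ?S" for p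
  proof -
    have sp: "sum_mset p = n" and pos: "parts_pos p" using that by (auto simp: Pdset_def)
    from that obtain s' where "count p s' = 1" by (auto simp: Pdset_def)
    then have ne: "p \<noteq> {#}" by auto
    then have "?g p \<in># p" by (rule Min_mem)
    then show ?thesis using mem_le_sum[of "?g p" p] sp pos by (auto simp: parts_pos_def Suc_le_eq)
  qed
  have fin: "finite {p\<in>?S. ?g p = s}" if "s \<in> {1..n}" for s
  proof -
    have "1 \<le> s" "Suc s \<le> N" using that nN by auto
    then show ?thesis unfolding Pd_fiber[OF m1 \<open>1 \<le> s\<close> \<open>Suc s \<le> N\<close> less_imp_le[OF nN]]
      by (intro fin_msS) auto
  qed
  have "real (Pdprime m n) = (\<Sum>p\<in>?S. 1)" by (simp add: Pdprime_def Pdset_def)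
  also have "\<dots> = (\<Sum>s\<in>{1..n}. \<Sum>p\<in>{p\<in>?S. ?g p = s}. 1)"
    by (rule sum_fibers(2)[of ?S ?g]) (use g fin in auto)
  also have "\<dots> = (\<Sum>s\<in>{1..n}. (XX ^ s * XX ^ (Suc s * m) * En N (Suc s)) $ n)"
  proof (rule sum.cong[OF refl])
    fix s assume s: "s \<in> {1..n}"
    then have s1: "1 \<le> s" and sN: "Suc s \<le> N" using nN by auto
    have "(\<Sum>p\<in>{p\<in>?S. ?g p = s}. 1) = real (card (msS {s..N} (?M s) n))"
      unfolding Pd_fiber[OF m1 s1 sN less_imp_le[OF nN]] by simp
    also have "\<dots> = (\<Prod>i\<in>{s..N}. fac (?M s i) 1 i) $ n"
      using s1 by (subst cnt1) auto
    also have "(\<Prod>i\<in>{s..N}. fac (?M s i) 1 i) = fac {1} 1 s * (fac {m} 1 (Suc s) * (\<Prod>i\<in>{Suc (Suc s)..N}. fac (?M s i) 1 i))"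
      using sN by (simp add: prod.atLeast_Suc_atMost)
    also have "(\<Prod>i\<in>{Suc (Suc s)..N}. fac (?M s i) 1 i) = En N (Suc s)"
      by (rule En_fac') auto
    also have "fac {1} 1 s = XX ^ s" using s1 fac_single[of s 1] by simp
    also have "fac {m} 1 (Suc s) = XX ^ (Suc s * m)" using fac_single[of "Suc s" m] by simp
    finally show "(\<Sum>p\<in>{p\<in>?S. ?g p = s}. 1) = (XX ^ s * XX ^ (Suc s * m) * En N (Suc s)) $ n"
      by (simp add: mult.assoc)
  qed
  finally show ?thesis .
qed


lemma G_split:
  "G (Suc n) s = En (Suc n) 0 + XX ^ s * En (Suc n) 1 + (\<Sum>i\<in>{1..n}. XX ^ (s * Suc i) * En (Suc n) (Suc i))"
proof -
  have "G (Suc n) s = XX ^ (s * 0) * En (Suc n) 0 + (\<Sum>i=0..n. XX ^ (s * Suc i) * En (Suc n) (Suc i))"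
    unfolding G_def by (simp only: sum.atLeast0_atMost_Suc_shift comp_def)
  also have "(\<Sum>i=0..n. XX ^ (s * Suc i) * En (Suc n) (Suc i)) =
      XX ^ (s * Suc 0) * En (Suc n) (Suc 0) + (\<Sum>i=Suc 0..n. XX ^ (s * Suc i) * En (Suc n) (Suc i))"
    by (subst sum.atLeast_Suc_atMost) auto
  finally show ?thesis by simp
qed

lemma A_count:
  assumes k: "k \<ge> 1" and n1: "n \<ge> 1"
  shows "2 * A (2 * k) n = (G (Suc n) (2 * k)) $ Suc n"
proof -
  define N where "N = Suc n"
  define m where "m = 2 * k - 1"
  have m1: "m \<ge> 1" and mk: "m + 1 = 2 * k" using k by (auto simp: m_def)
  have nN: "n < N" "n \<le> N" and N1: "1 \<le> N" by (auto simp: N_def)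
  define F where "F = En N 1 + XX ^ m * En N 1 + (\<Sum>s\<in>{1..n}. XX ^ s * En N (Suc s))
     + (\<Sum>s\<in>{1..n}. XX ^ s * XX ^ (Suc s * m) * En N (Suc s))"
  have "2 * A (2 * k) n = real (P1 n) + real (Pprime m n) + real (P2 n) + real (Pdprime m n)"
    unfolding A_def m_def by simp
  also have "\<dots> = F $ n"
    unfolding F_def P1_count[OF nN(2)] Pp_count[OF m1 nN(2) N1] P2_count[OF n1 nN(1)] Pd_count[OF m1 nN(1)]
    by (simp add: fps_sum_nth)
  also have "F $ n = (XX * F) $ Suc n" by (simp add: fps_X_mult_nth)
  also have "XX * F = G N (2 * k) - 1"
  proof -
    have s1: "XX * (\<Sum>s\<in>{1..n}. XX ^ s * En N (Suc s)) = (\<Sum>i\<in>{1..n}. XX ^ (1 * Suc i) * En N (Suc i))"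
      by (simp add: sum_distrib_left mult.assoc)
    have s2: "XX * (\<Sum>s\<in>{1..n}. XX ^ s * XX ^ (Suc s * m) * En N (Suc s)) =
        (\<Sum>i\<in>{1..n}. XX ^ (2 * k * Suc i) * En N (Suc i))"
      unfolding sum_distrib_left
    proof (rule sum.cong[OF refl])
      fix i
      have e: "Suc i + Suc i * m = 2 * k * Suc i"
      proof -
        have "Suc i + Suc i * m = Suc i * (m + 1)" by (simp add: algebra_simps)
        then show ?thesis unfolding mk by (simp add: mult.commute)
      qed
      have e': "Suc (i + Suc i * m) = 2 * k * Suc i" using e by simp
      have "XX * (XX ^ i * XX ^ (Suc i * m)) = XX ^ (2 * k * Suc i)"
        by (simp only: mult.assoc[symmetric] power_Suc[symmetric] power_add[symmetric] e')
      then show "XX * (XX ^ i * XX ^ (Suc i * m) * En N (Suc i)) = XX ^ (2 * k * Suc i) * En N (Suc i)"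
        by (simp add: mult.assoc[symmetric])
    qed
    have x1: "XX * (XX ^ m * En N 1) = XX ^ (2 * k) * En N 1"
      by (simp only: mult.assoc[symmetric] power_Suc[symmetric]) (simp add: mk[symmetric])
    have g1: "G N 1 = 2 * En N 0 - 1" using G_rec[of N 0] by simp
    have "XX * F = XX * En N 1 + XX * (XX ^ m * En N 1) + XX * (\<Sum>s\<in>{1..n}. XX ^ s * En N (Suc s))
       + XX * (\<Sum>s\<in>{1..n}. XX ^ s * XX ^ (Suc s * m) * En N (Suc s))"
      unfolding F_def by (simp add: algebra_simps)
    also have "\<dots> = (G N 1 - En N 0) + (G N (2 * k) - En N 0)"
      unfolding s1 s2 x1 unfolding N_def G_split by simp
    also have "\<dots> = G N (2 * k) - 1" unfolding g1 by simp
    finally show ?thesis .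
  qed
  finally show ?thesis unfolding N_def by simp
qed


lemma wt_sign: "wt (\<lambda>v. if P v then -1 else 1) p = (-1) ^ size (filter_mset P p)"
  by (induction p) (auto simp: wt_def)

lemma signed_card:
  assumes "finite S"
  shows "real (card {p\<in>S. P p}) - real (card {p\<in>S. \<not> P p}) = (\<Sum>p\<in>S. if P p then 1 else -1)"
proof -
  have "(\<Sum>p\<in>S. if P p then 1 else -1) = (\<Sum>p\<in>S \<inter> {p. P p}. 1) + (\<Sum>p\<in>S \<inter> - {p. P p}. -1::real)"
    by (rule sum.If_cases[OF assms])
  also have "S \<inter> {p. P p} = {p\<in>S. P p}" by auto
  also have "S \<inter> - {p. P p} = {p\<in>S. \<not> P p}" by auto
  finally show ?thesis by simp
qed

lemma sign_even: "(if even m then 1 else -1) = ((-1::real) ^ m)"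
  by simp

lemma odd_img: "(v::nat) \<in> (\<lambda>i. 2 * i - 1) ` {1..l} \<longleftrightarrow> odd v \<and> v \<le> 2 * l - 1"
proof
  assume "v \<in> (\<lambda>i. 2 * i - 1) ` {1..l}"
  then obtain i where "i \<in> {1..l}" "v = 2 * i - 1" by auto
  then show "odd v \<and> v \<le> 2 * l - 1" by auto
next
  assume v: "odd v \<and> v \<le> 2 * l - 1"
  then have "v = 2 * ((v + 1) div 2) - 1" "(v + 1) div 2 \<in> {1..l}" by presburger+
  then show "v \<in> (\<lambda>i. 2 * i - 1) ` {1..l}" by (metis image_eqI)
qed

lemma even_img: "(v::nat) \<in> (\<lambda>i. 2 * l + 2 * i) ` {1..b} \<longleftrightarrow> even v \<and> 2 * l + 2 \<le> v \<and> v \<le> 2 * l + 2 * b"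
proof
  assume "v \<in> (\<lambda>i. 2 * l + 2 * i) ` {1..b}"
  then obtain i where "i \<in> {1..b}" "v = 2 * l + 2 * i" by auto
  then show "even v \<and> 2 * l + 2 \<le> v \<and> v \<le> 2 * l + 2 * b" by auto
next
  assume v: "even v \<and> 2 * l + 2 \<le> v \<and> v \<le> 2 * l + 2 * b"
  then have "v = 2 * l + 2 * ((v - 2 * l) div 2)" "(v - 2 * l) div 2 \<in> {1..b}" by presburger+
  then show "v \<in> (\<lambda>i. 2 * l + 2 * i) ` {1..b}" by (metis image_eqI)
qed


definition Bal :: "nat \<Rightarrow> nat \<Rightarrow> nat multiset set" where
  "Bal k n = {p. parts_pos p \<and> sum_mset p = n \<and> (\<exists>x\<in>#p. odd x) \<and>
     (let L = Max {x \<in> set_mset p. odd x} in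
        \<forall>x\<in>#p. even x \<longrightarrow> L + 3 \<le> x \<and> x \<le> L + 2 * k - 1 \<and> count p x = 1)}"

lemma Bset_eq: "Bset e k n = {p\<in>Bal k n. even (size (filter_mset even p)) = e}"
  by (auto simp: Bset_def Bal_def)

definition Vb :: "nat \<Rightarrow> nat \<Rightarrow> nat set" where
  "Vb k l = (\<lambda>i. 2 * i - 1) ` {1..l} \<union> (\<lambda>i. 2 * l + 2 * i) ` {1..k - 1}"

definition Mb :: "nat \<Rightarrow> nat \<Rightarrow> nat set" where
  "Mb l v = (if v = 2 * l - 1 then {c. c \<ge> 1} else if odd v then UNIV else {0,1})"

definition sgb :: "nat \<Rightarrow> real" where "sgb v = (if even v then -1 else 1)"

definition gB :: "nat multiset \<Rightarrow> nat" where "gB p = (Max {x \<in> set_mset p. odd x} + 1) div 2"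

lemma Vb_iff: "v \<in> Vb k l \<longleftrightarrow> (odd v \<and> v \<le> 2 * l - 1) \<or> (even v \<and> 2 * l + 2 \<le> v \<and> v \<le> 2 * l + 2 * (k - 1))"
  unfolding Vb_def Un_iff odd_img even_img ..

lemma B_fiber:
  assumes k: "k \<ge> 1" and l: "1 \<le> l"
  shows "{p\<in>Bal k n. gB p = l} = msS (Vb k l) (Mb l) n"
proof (intro set_eqI iffI)
  fix p assume p: "p \<in> {p\<in>Bal k n. gB p = l}"
  define L where "L = Max {x \<in> set_mset p. odd x}"
  have sp: "sum_mset p = n" and ex: "\<exists>x\<in>#p. odd x"
    and ev: "\<And>x. x \<in># p \<Longrightarrow> even x \<Longrightarrow> L + 3 \<le> x \<and> x \<le> L + 2 * k - 1 \<and> count p x = 1"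
    and g: "(L + 1) div 2 = l"
    using p by (auto simp: Bal_def gB_def L_def Let_def)
  have fin: "finite {x \<in> set_mset p. odd x}" by simp
  have ne: "{x \<in> set_mset p. odd x} \<noteq> {}" using ex by auto
  have Lin: "L \<in> {x \<in> set_mset p. odd x}" unfolding L_def using Max_in[OF fin ne] .
  have Lmax: "\<And>x. x \<in># p \<Longrightarrow> odd x \<Longrightarrow> x \<le> L" unfolding L_def using fin by (auto intro: Max_ge)
  have L2: "L = 2 * l - 1" using Lin g by auto
  have sub: "set_mset p \<subseteq> Vb k l"
  proof
    fix x assume x: "x \<in> set_mset p"
    show "x \<in> Vb k l"
    proof (cases "odd x")
      case True then show ?thesis using Lmax[of x] x L2 by (simp add: Vb_iff)
    next
      case False then have "L + 3 \<le> x \<and> x \<le> L + 2 * k - 1" using ev[of x] x by simp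
      then have "2 * l + 2 \<le> x \<and> x \<le> 2 * l + 2 * (k - 1)" using L2 l k by arith
      then show ?thesis using False by (simp add: Vb_iff)
    qed
  qed
  have cnt: "\<forall>v\<in>Vb k l. count p v \<in> Mb l v"
  proof
    fix v assume v: "v \<in> Vb k l"
    show "count p v \<in> Mb l v"
    proof (cases "v = 2 * l - 1")
      case True then have "v \<in># p" using Lin L2 by simp
      then show ?thesis using True by (simp add: Mb_def Suc_le_eq)
    next
      case False
      show ?thesis
      proof (cases "odd v")
        case True then show ?thesis using False by (simp add: Mb_def)
      next
        case ev2: False
        have "count p v = 0 \<or> count p v = 1"
        proof (cases "v \<in># p")
          case True then show ?thesis using ev[of v] ev2 by simp
        next
          case False then show ?thesis by (simp add: not_in_iff)
        qed
        then show ?thesis using False ev2 by (auto simp: Mb_def)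
      qed
    qed
  qed
  show "p \<in> msS (Vb k l) (Mb l) n" using sub cnt sp by (simp add: msS_def)
next
  fix p assume p: "p \<in> msS (Vb k l) (Mb l) n"
  then have sub: "set_mset p \<subseteq> Vb k l" and sp: "sum_mset p = n"
    and c: "\<forall>v\<in>Vb k l. count p v \<in> Mb l v" by (auto simp: msS_def)
  have o1: "odd (2 * l - 1)" using l by presburger
  have inV: "2 * l - 1 \<in> Vb k l" using o1 by (simp add: Vb_iff)
  have "count p (2 * l - 1) \<ge> 1" using bspec[OF c inV] by (simp add: Mb_def)
  then have Lp: "2 * l - 1 \<in># p" by (simp add: Suc_le_eq)
  have pos: "\<And>x. x \<in># p \<Longrightarrow> x > 0"
  proof -
    fix x assume "x \<in># p"
    then have "x \<in> Vb k l" using sub by auto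
    then show "x > 0" unfolding Vb_iff by (auto elim: oddE)
  qed
  have oddle: "x \<le> 2 * l - 1" if "x \<in># p" "odd x" for x
  proof -
    have "x \<in> Vb k l" using sub that(1) by auto
    then show ?thesis using that(2) unfolding Vb_iff by auto
  qed
  have fin: "finite {x \<in> set_mset p. odd x}" by simp
  have Lm: "Max {x \<in> set_mset p. odd x} = 2 * l - 1"
    by (rule Max_eqI[OF fin]) (use oddle Lp o1 in auto)
  have ev: "\<forall>x\<in>#p. even x \<longrightarrow> (2 * l - 1) + 3 \<le> x \<and> x \<le> (2 * l - 1) + 2 * k - 1 \<and> count p x = 1"
  proof (intro ballI impI)
    fix x assume x: "x \<in># p" and e: "even x"
    have "x \<in> Vb k l" using sub x by auto
    then have xr: "2 * l + 2 \<le> x \<and> x \<le> 2 * l + 2 * (k - 1)" using e unfolding Vb_iff by auto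
    have "x \<noteq> 2 * l - 1" using e o1 by auto
    then have "count p x \<in> {0,1}" using bspec[OF c, of x] x sub e by (auto simp: Mb_def)
    moreover have "count p x \<noteq> 0" using x by simp
    ultimately have "count p x = 1" by auto
    then show "(2 * l - 1) + 3 \<le> x \<and> x \<le> (2 * l - 1) + 2 * k - 1 \<and> count p x = 1"
      using xr l k by auto
  qed
  have "gB p = l" unfolding gB_def Lm using l by simp
  moreover have "p \<in> Bal k n"
  proof -
    have last: "(let L = Max {x \<in> set_mset p. odd x} in
        \<forall>x\<in>#p. even x \<longrightarrow> L + 3 \<le> x \<and> x \<le> L + 2 * k - 1 \<and> count p x = 1)"
      unfolding Let_def Lm by (rule ev)
    have pp: "parts_pos p" using pos by (simp add: parts_pos_def)
    have ex: "\<exists>x\<in>#p. odd x" using Lp o1 by blast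
    show ?thesis unfolding Bal_def using pp sp ex last by blast
  qed
  ultimately show "p \<in> {p\<in>Bal k n. gB p = l}" by simp
qed


lemma Vb_fin: "finite (Vb k l)" by (simp add: Vb_def)
lemma Vb_0: "0 \<notin> Vb k l" by (simp add: Vb_iff)

lemma B_prod:
  assumes k: "k \<ge> 1" and l: "l \<ge> 1"
  shows "(\<Prod>v\<in>Vb k l. fac (Mb l v) (sgb v) v) = XX ^ (2 * l - 1) * Ob l * pp (k - 1) l"
proof -
  let ?f = "\<lambda>v. fac (Mb l v) (sgb v) v"
  have disj: "(\<lambda>i. 2 * i - 1) ` {1..l} \<inter> (\<lambda>i. 2 * l + 2 * i) ` {1..k - 1} = {}"
  proof (rule equals0I)
    fix v assume "v \<in> (\<lambda>i. 2 * i - 1) ` {1..l} \<inter> (\<lambda>i. 2 * l + 2 * i) ` {1..k - 1}"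
    then have "odd v" "even v" unfolding Int_iff odd_img even_img by auto
    then show False by simp
  qed
  have "(\<Prod>v\<in>Vb k l. ?f v) = (\<Prod>v\<in>(\<lambda>i. 2 * i - 1) ` {1..l}. ?f v) * (\<Prod>v\<in>(\<lambda>i. 2 * l + 2 * i) ` {1..k - 1}. ?f v)"
    unfolding Vb_def by (rule prod.union_disjoint) (use disj in auto)
  also have "(\<Prod>v\<in>(\<lambda>i. 2 * i - 1) ` {1..l}. ?f v) = (\<Prod>i\<in>{1..l}. ?f (2 * i - 1))"
    by (rule prod.reindex_cong[where l="\<lambda>i. 2 * i - 1"]) (auto simp: inj_on_def)
  also have "\<dots> = XX ^ (2 * l - 1) * Ob l"
  proof -
    obtain l' where l': "l = Suc l'" using l by (cases l) auto
    have "(\<Prod>i\<in>{1..l'}. ?f (2 * i - 1)) = Ob l'"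
      unfolding Ob_def
    proof (rule prod.cong[OF refl])
      fix i assume i: "i \<in> {1..l'}"
      have a1: "2 * i - 1 \<noteq> 2 * l - 1" using i l' by auto
      have a2: "odd (2 * i - 1)" using i by presburger
      note a = a1 a2
      show "?f (2 * i - 1) = Fu (2 * i - 1)" using a by (simp add: Mb_def sgb_def Fu_def)
    qed
    moreover have "?f (2 * Suc l' - 1) = XX ^ (2 * l' + 1) * Fu (2 * l' + 1)"
      using fac_ge1[of "2 * l' + 1"] l' by (simp add: Mb_def sgb_def Fu_def)
    ultimately show ?thesis unfolding l' by (simp add: prod.cl_ivl_Suc Ob_Suc algebra_simps)
  qed
  also have "(\<Prod>v\<in>(\<lambda>i. 2 * l + 2 * i) ` {1..k - 1}. ?f v) = (\<Prod>i\<in>{1..k - 1}. ?f (2 * l + 2 * i))"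
    by (rule prod.reindex_cong[where l="\<lambda>i. 2 * l + 2 * i"]) (auto simp: inj_on_def)
  also have "\<dots> = pp (k - 1) l"
    unfolding pp_def
  proof (rule prod.cong[OF refl])
    fix i assume i: "i \<in> {1..k - 1}"
    have "2 * l + 2 * i \<noteq> 2 * l - 1" using i by auto
    then show "?f (2 * l + 2 * i) = 1 - XX ^ (2 * l + 2 * i)"
      using fac01_m1[of "2 * l + 2 * i"] l by (simp add: Mb_def sgb_def)
  qed
  finally show ?thesis .
qed

lemma B_count:
  assumes k: "k \<ge> 1" and nN: "n \<le> N"
  shows "real (Be k n) - real (Bo k n) = (aa N (k - 1)) $ n"
proof -
  let ?S = "Bal k n"
  have g: "gB p \<in> {1..N}" if "p \<in> ?S" for p
  proof -
    define L where "L = Max {x \<in> set_mset p. odd x}"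
    have sp: "sum_mset p = n" and ex: "\<exists>x\<in>#p. odd x" using that by (auto simp: Bal_def)
    have fin: "finite {x \<in> set_mset p. odd x}" by simp
    have ne: "{x \<in> set_mset p. odd x} \<noteq> {}" using ex by auto
    have Lin: "L \<in> {x \<in> set_mset p. odd x}" unfolding L_def using Max_in[OF fin ne] .
    then have "L \<le> N" "odd L" using mem_le_sum[of L p] sp nN by auto
    then show ?thesis unfolding gB_def L_def[symmetric] by (auto elim!: oddE)
  qed
  have fin: "finite {p\<in>?S. gB p = l}" if "l \<in> {1..N}" for l
  proof -
    have "1 \<le> l" using that by simp
    then show ?thesis unfolding B_fiber[OF k \<open>1 \<le> l\<close>] by (intro fin_msS Vb_fin Vb_0)
  qed
  have finS: "finite ?S" by (rule sum_fibers(1)[of ?S gB "{1..N}"]) (use g fin in auto)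
  have "real (Be k n) - real (Bo k n) = real (card {p\<in>?S. even (size (filter_mset even p))})
      - real (card {p\<in>?S. \<not> even (size (filter_mset even p))})"
    unfolding Be_def Bo_def Bset_eq by simp
  also have "\<dots> = (\<Sum>p\<in>?S. wt sgb p)"
    unfolding signed_card[OF finS] sgb_def wt_sign by (simp add: minus_one_power_iff)
  also have "\<dots> = (\<Sum>l\<in>{1..N}. \<Sum>p\<in>{p\<in>?S. gB p = l}. wt sgb p)"
    by (rule sum_fibers(2)[of ?S gB]) (use g fin in auto)
  also have "\<dots> = (\<Sum>l\<in>{1..N}. (XX ^ (2 * l - 1) * Ob l * pp (k - 1) l) $ n)"
  proof (rule sum.cong[OF refl])
    fix l assume "l \<in> {1..N}"
    then have l: "1 \<le> l" by simp
    show "(\<Sum>p\<in>{p\<in>?S. gB p = l}. wt sgb p) = (XX ^ (2 * l - 1) * Ob l * pp (k - 1) l) $ n"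
      unfolding B_fiber[OF k l] cnt[OF Vb_fin Vb_0] B_prod[OF k l] ..
  qed
  also have "\<dots> = (aa N (k - 1)) $ n" by (simp add: aa_def Psi_def fps_sum_nth)
  finally show ?thesis .
qed


definition Call :: "nat \<Rightarrow> nat \<Rightarrow> (nat multiset \<times> nat) set" where
  "Call k t = {(p, l). l \<ge> 1 \<and> parts_pos p \<and> sum_mset p = t \<and> 2 * l \<in># p \<and>
     (\<forall>x. x \<le> l \<longrightarrow> count p x \<le> 1) \<and>
     (\<forall>x\<in>#p. x > 2 * l \<longrightarrow> even x \<and> 2 * l + 2 \<le> x \<and> x \<le> 2 * l + 2 * k - 2 \<and> count p x = 1)}"

lemma Cset_eq: "Cset e k t = {q\<in>Call k t. even (size (filter_mset (\<lambda>x. x > 2 * snd q) (fst q))) = e}"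
  by (auto simp: Cset_def Call_def)

definition Vc :: "nat \<Rightarrow> nat \<Rightarrow> nat set" where
  "Vc k l = {1..2 * l} \<union> (\<lambda>i. 2 * l + 2 * i) ` {1..k - 1}"

definition Mc :: "nat \<Rightarrow> nat \<Rightarrow> nat set" where
  "Mc l v = (if v \<le> l then {0,1} else if v < 2 * l then UNIV else if v = 2 * l then {c. c \<ge> 1} else {0,1})"

definition sgc :: "nat \<Rightarrow> nat \<Rightarrow> real" where "sgc l v = (if v > 2 * l then -1 else 1)"

lemma Vc_iff: "v \<in> Vc k l \<longleftrightarrow> (1 \<le> v \<and> v \<le> 2 * l) \<or> (even v \<and> 2 * l + 2 \<le> v \<and> v \<le> 2 * l + 2 * (k - 1))"
  unfolding Vc_def Un_iff even_img atLeastAtMost_iff ..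

lemma Vc_fin: "finite (Vc k l)" by (simp add: Vc_def)
lemma Vc_0: "0 \<notin> Vc k l" by (simp add: Vc_iff)

lemma C_fiber:
  assumes k: "k \<ge> 1" and l: "1 \<le> l"
  shows "{p. (p, l) \<in> Call k t} = msS (Vc k l) (Mc l) t"
proof (intro set_eqI iffI)
  fix p assume "p \<in> {p. (p, l) \<in> Call k t}"
  then have pos: "\<And>x. x \<in># p \<Longrightarrow> x > 0" and sp: "sum_mset p = t" and lp: "2 * l \<in># p"
    and d: "\<And>x. x \<le> l \<Longrightarrow> count p x \<le> 1"
    and big: "\<And>x. x \<in># p \<Longrightarrow> x > 2 * l \<Longrightarrow> even x \<and> 2 * l + 2 \<le> x \<and> x \<le> 2 * l + 2 * k - 2 \<and> count p x = 1"
    by (auto simp: Call_def parts_pos_def)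
  have sub: "set_mset p \<subseteq> Vc k l"
  proof
    fix x assume x: "x \<in> set_mset p"
    show "x \<in> Vc k l"
    proof (cases "x \<le> 2 * l")
      case True then show ?thesis using pos[of x] x by (simp add: Vc_iff)
    next
      case False
      then have "even x \<and> 2 * l + 2 \<le> x \<and> x \<le> 2 * l + 2 * k - 2" using big[of x] x by simp
      then have "even x \<and> 2 * l + 2 \<le> x \<and> x \<le> 2 * l + 2 * (k - 1)" using k by arith
      then show ?thesis by (simp add: Vc_iff)
    qed
  qed
  have cnt: "\<forall>v\<in>Vc k l. count p v \<in> Mc l v"
  proof
    fix v assume v: "v \<in> Vc k l"
    consider "v \<le> l" | "l < v" "v < 2 * l" | "v = 2 * l" | "2 * l < v" by linarith
    then show "count p v \<in> Mc l v"
    proof cases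
      case 1 then show ?thesis using d[of v] by (auto simp: Mc_def le_Suc_eq)
    next
      case 2 then show ?thesis by (simp add: Mc_def)
    next
      case 3 then show ?thesis using lp l by (simp add: Mc_def Suc_le_eq)
    next
      case 4
      have "count p v = 0 \<or> count p v = 1"
      proof (cases "v \<in># p")
        case True then show ?thesis using big[of v] 4 by simp
      next
        case False then show ?thesis by (simp add: not_in_iff)
      qed
      then show ?thesis using 4 by (auto simp: Mc_def)
    qed
  qed
  show "p \<in> msS (Vc k l) (Mc l) t" using sub cnt sp by (simp add: msS_def)
next
  fix p assume p: "p \<in> msS (Vc k l) (Mc l) t"
  then have sub: "set_mset p \<subseteq> Vc k l" and sp: "sum_mset p = t"
    and c: "\<forall>v\<in>Vc k l. count p v \<in> Mc l v" by (auto simp: msS_def)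
  have inV: "2 * l \<in> Vc k l" using l by (simp add: Vc_iff)
  have "count p (2 * l) \<in> Mc l (2 * l)" using bspec[OF c inV] .
  then have "count p (2 * l) \<ge> 1" using l by (simp add: Mc_def)
  then have lp: "2 * l \<in># p" by (simp add: Suc_le_eq)
  have pos: "\<And>x. x \<in># p \<Longrightarrow> x > 0"
  proof -
    fix x assume "x \<in># p"
    then have "x \<in> Vc k l" using sub by auto
    then show "x > 0" unfolding Vc_iff by auto
  qed
  have d: "count p x \<le> 1" if "x \<le> l" for x
  proof (cases "x \<in># p")
    case True then have "x \<in> Vc k l" using sub by auto
    then have "count p x \<in> Mc l x" using c by blast
    then show ?thesis using that by (auto simp: Mc_def)
  next
    case False then show ?thesis by (simp add: not_in_iff)
  qed
  have big: "even x \<and> 2 * l + 2 \<le> x \<and> x \<le> 2 * l + 2 * k - 2 \<and> count p x = 1"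
    if x: "x \<in># p" "x > 2 * l" for x
  proof -
    have xv: "x \<in> Vc k l" using sub x by auto
    then have r: "even x \<and> 2 * l + 2 \<le> x \<and> x \<le> 2 * l + 2 * (k - 1)" using x(2) unfolding Vc_iff by auto
    have "count p x \<in> Mc l x" using c xv by blast
    then have "count p x \<in> {0,1}" using x(2) by (simp add: Mc_def)
    moreover have "count p x \<noteq> 0" using x(1) by simp
    ultimately have "count p x = 1" by auto
    then show ?thesis using r k by auto
  qed
  show "p \<in> {p. (p, l) \<in> Call k t}"
    unfolding Call_def using l pos sp lp d big by (auto simp: parts_pos_def)
qed


lemma euler_Fu: "(\<Prod>v\<in>{1..l}. 1 + XX ^ v) * (\<Prod>v\<in>{Suc l..2 * l}. Fu v) = Ob l"
proof -
  define A where "A = (\<Prod>v\<in>{1..l}. 1 + XX ^ v)"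
  define Bq where "Bq = (\<Prod>v\<in>{Suc l..2 * l}. Fu v)"
  define R where "R = (\<Prod>v\<in>{Suc l..2 * l}. 1 - XX ^ v)"
  define Q where "Q = (\<Prod>i\<in>{1..l}. 1 - XX ^ (2 * i - 1))"
  have BR: "Bq * R = 1"
  proof -
    have "Bq * R = (\<Prod>v\<in>{Suc l..2 * l}. Fu v * (1 - XX ^ v))"
      unfolding Bq_def R_def by (simp add: prod.distrib)
    also have "\<dots> = 1" by (intro prod.neutral ballI Fu_inv) auto
    finally show ?thesis .
  qed
  have OQ: "Ob l * Q = 1"
  proof -
    have "Ob l * Q = (\<Prod>i\<in>{1..l}. Fu (2 * i - 1) * (1 - XX ^ (2 * i - 1)))"
      unfolding Ob_def Q_def by (simp add: prod.distrib)
    also have "\<dots> = 1" by (intro prod.neutral ballI Fu_inv) auto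
    finally show ?thesis .
  qed
  have AQ: "A * Q = R" unfolding A_def Q_def R_def by (rule euler_fin)
  have "(A * Bq) * Q = Ob l * Q"
  proof -
    have "(A * Bq) * Q = (A * Q) * Bq" by (simp add: algebra_simps)
    also have "\<dots> = 1" unfolding AQ using BR by (simp add: mult.commute)
    finally show ?thesis using OQ by simp
  qed
  moreover have "Q \<noteq> 0"
  proof
    assume "Q = 0"
    then have "Q $ 0 = 0" by simp
    moreover have "Q $ 0 = 1" unfolding Q_def by (simp add: prod_nth0)
    ultimately show False by simp
  qed
  ultimately have "A * Bq = Ob l" by simp
  then show ?thesis unfolding A_def Bq_def .
qed

lemma C_prod:
  assumes k: "k \<ge> 1" and l: "l \<ge> 1"
  shows "(\<Prod>v\<in>Vc k l. fac (Mc l v) (sgc l v) v) = XX * (XX ^ (2 * l - 1) * Ob l * pp (k - 1) l)"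
proof -
  let ?f = "\<lambda>v. fac (Mc l v) (sgc l v) v"
  have disj: "{1..2 * l} \<inter> (\<lambda>i. 2 * l + 2 * i) ` {1..k - 1} = {}"
  proof (rule equals0I)
    fix v assume "v \<in> {1..2 * l} \<inter> (\<lambda>i. 2 * l + 2 * i) ` {1..k - 1}"
    then have "v \<le> 2 * l" "2 * l + 2 \<le> v" unfolding Int_iff even_img by auto
    then show False by simp
  qed
  have "(\<Prod>v\<in>Vc k l. ?f v) = (\<Prod>v\<in>{1..2 * l}. ?f v) * (\<Prod>v\<in>(\<lambda>i. 2 * l + 2 * i) ` {1..k - 1}. ?f v)"
    unfolding Vc_def by (rule prod.union_disjoint) (use disj in auto)
  also have "(\<Prod>v\<in>(\<lambda>i. 2 * l + 2 * i) ` {1..k - 1}. ?f v) = (\<Prod>i\<in>{1..k - 1}. ?f (2 * l + 2 * i))"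
    by (rule prod.reindex_cong[where l="\<lambda>i. 2 * l + 2 * i"]) (auto simp: inj_on_def)
  also have "\<dots> = pp (k - 1) l"
    unfolding pp_def
  proof (rule prod.cong[OF refl])
    fix i assume i: "i \<in> {1..k - 1}"
    then show "?f (2 * l + 2 * i) = 1 - XX ^ (2 * l + 2 * i)"
      using fac01_m1[of "2 * l + 2 * i"] l by (simp add: Mc_def sgc_def)
  qed
  also have "(\<Prod>v\<in>{1..2 * l}. ?f v) = XX ^ (2 * l) * Ob l"
  proof -
    have sp: "{1..2 * l} = {1..l} \<union> {Suc l..2 * l}" by auto
    have "(\<Prod>v\<in>{1..2 * l}. ?f v) = (\<Prod>v\<in>{1..l}. ?f v) * (\<Prod>v\<in>{Suc l..2 * l}. ?f v)"
      unfolding sp by (rule prod.union_disjoint) auto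
    also have "(\<Prod>v\<in>{1..l}. ?f v) = (\<Prod>v\<in>{1..l}. 1 + XX ^ v)"
    proof (rule prod.cong[OF refl])
      fix v assume v: "v \<in> {1..l}"
      then have "v \<le> 2 * l" by simp
      then show "?f v = 1 + XX ^ v" using fac01_1[of v] v by (simp add: Mc_def sgc_def)
    qed
    also have "(\<Prod>v\<in>{Suc l..2 * l}. ?f v) = XX ^ (2 * l) * (\<Prod>v\<in>{Suc l..2 * l}. Fu v)"
    proof -
      obtain m where m: "2 * l = Suc m" using l by (cases l) auto
      have lm: "Suc l \<le> Suc m" using m l by simp
      have "(\<Prod>v\<in>{Suc l..Suc m}. ?f v) = (\<Prod>v\<in>{Suc l..m}. ?f v) * ?f (Suc m)"
        using lm by (simp add: prod.cl_ivl_Suc)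
      also have "(\<Prod>v\<in>{Suc l..m}. ?f v) = (\<Prod>v\<in>{Suc l..m}. Fu v)"
      proof (rule prod.cong[OF refl])
        fix v assume v: "v \<in> {Suc l..m}"
        then have "\<not> v \<le> l" "v < 2 * l" "\<not> 2 * l < v" using m by auto
        then show "?f v = Fu v" by (simp add: Mc_def sgc_def Fu_def)
      qed
      also have "?f (Suc m) = XX ^ (Suc m) * Fu (Suc m)"
      proof -
        have "\<not> Suc m \<le> l" "\<not> Suc m < 2 * l" "Suc m = 2 * l" using m l by auto
        then show ?thesis using fac_ge1[of "Suc m"] by (simp add: Mc_def sgc_def Fu_def)
      qed
      also have "(\<Prod>v\<in>{Suc l..Suc m}. Fu v) = (\<Prod>v\<in>{Suc l..m}. Fu v) * Fu (Suc m)"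
        using lm by (simp add: prod.cl_ivl_Suc)
      ultimately show ?thesis unfolding m by (simp add: algebra_simps)
    qed
    finally show ?thesis using euler_Fu[of l] by (simp add: algebra_simps)
  qed
  finally show ?thesis
    using l by (simp add: algebra_simps power_Suc[symmetric] del: power_Suc)
qed


lemma C_fiber_img:
  assumes k: "k \<ge> 1" and l: "1 \<le> l"
  shows "{q\<in>Call k t. snd q = l} = (\<lambda>p. (p, l)) ` msS (Vc k l) (Mc l) t"
proof -
  have "{q\<in>Call k t. snd q = l} = (\<lambda>p. (p, l)) ` {p. (p, l) \<in> Call k t}" by force
  then show ?thesis unfolding C_fiber[OF k l] .
qed

lemma C_count:
  assumes k: "k \<ge> 1" and tN: "t \<le> N"
  shows "real (Ce k t) - real (Co k t) = (XX * aa N (k - 1)) $ t"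
proof -
  let ?S = "Call k t"
  let ?h = "\<lambda>q::nat multiset \<times> nat. if even (size (filter_mset (\<lambda>x. x > 2 * snd q) (fst q))) then 1 else (-1::real)"
  have g: "snd q \<in> {1..N}" if "q \<in> ?S" for q
  proof -
    obtain p l where q: "q = (p, l)" by (cases q)
    have l: "l \<ge> 1" and sp: "sum_mset p = t" and lp: "2 * l \<in># p" using that q by (auto simp: Call_def)
    have "2 * l \<le> t" using mem_le_sum[OF lp] sp by simp
    then show ?thesis using q l tN by simp
  qed
  have fin: "finite {q\<in>?S. snd q = l}" if "l \<in> {1..N}" for l
  proof -
    have "1 \<le> l" using that by simp
    then show ?thesis unfolding C_fiber_img[OF k \<open>1 \<le> l\<close>] by (intro finite_imageI fin_msS Vc_fin Vc_0)
  qed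
  have finS: "finite ?S" by (rule sum_fibers(1)[of ?S snd "{1..N}"]) (use g fin in auto)
  have "real (Ce k t) - real (Co k t) = real (card {q\<in>?S. even (size (filter_mset (\<lambda>x. x > 2 * snd q) (fst q)))})
      - real (card {q\<in>?S. \<not> even (size (filter_mset (\<lambda>x. x > 2 * snd q) (fst q)))})"
    unfolding Ce_def Co_def Cset_eq by simp
  also have "\<dots> = (\<Sum>q\<in>?S. ?h q)"
    by (rule signed_card[OF finS])
  also have "\<dots> = (\<Sum>l\<in>{1..N}. \<Sum>q\<in>{q\<in>?S. snd q = l}. ?h q)"
    by (rule sum_fibers(2)[of ?S snd]) (use g fin in auto)
  also have "\<dots> = (\<Sum>l\<in>{1..N}. (XX * (XX ^ (2 * l - 1) * Ob l * pp (k - 1) l)) $ t)"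
  proof (rule sum.cong[OF refl])
    fix l assume "l \<in> {1..N}"
    then have l: "1 \<le> l" by simp
    have inj: "inj_on (\<lambda>p. (p, l)) (msS (Vc k l) (Mc l) t)" by (rule inj_onI) simp
    have "(\<Sum>q\<in>{q\<in>?S. snd q = l}. ?h q) = (\<Sum>p\<in>msS (Vc k l) (Mc l) t. ?h (p, l))"
      unfolding C_fiber_img[OF k l] sum.reindex[OF inj] by (simp add: comp_def)
    also have "\<dots> = (\<Sum>p\<in>msS (Vc k l) (Mc l) t. wt (sgc l) p)"
    proof (rule sum.cong[OF refl])
      fix p
      have "wt (sgc l) p = (-1) ^ size (filter_mset (\<lambda>v. v > 2 * l) p)"
        unfolding sgc_def by (rule wt_sign)
      then show "?h (p, l) = wt (sgc l) p" by (simp add: minus_one_power_iff)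
    qed
    also have "\<dots> = (XX * (XX ^ (2 * l - 1) * Ob l * pp (k - 1) l)) $ t"
      unfolding cnt[OF Vc_fin Vc_0] C_prod[OF k l] ..
    finally show "(\<Sum>q\<in>{q\<in>?S. snd q = l}. ?h q) = (XX * (XX ^ (2 * l - 1) * Ob l * pp (k - 1) l)) $ t" .
  qed
  also have "\<dots> = (XX * aa N (k - 1)) $ t"
    by (simp add: aa_def Psi_def fps_sum_nth sum_distrib_left)
  finally show ?thesis .
qed


theorem theorem5:
  fixes k n :: nat
  assumes "k \<ge> 1"
    and "n \<ge> 2 ^ (k - 1) * k * (2 * k - 1)"
  shows "A (2 * k) n = real (Be k n) - real (Bo k n)
    \<and> real (Be k n) - real (Bo k n) = real (Ce k (n + 1)) - real (Co k (n + 1))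
    \<and> real (Ce k (n + 1)) - real (Co k (n + 1)) = real (D (2 * k) (n + 1)) / 2"
proof -
  have k: "k \<ge> 1" using assms(1) .
  have p1: "(1::nat) \<le> 2 ^ (k - 1)" by simp
  have kk: "k * (2 * k - 1) \<le> 2 ^ (k - 1) * k * (2 * k - 1)"
    using mult_le_mono1[OF p1, of "k * (2 * k - 1)"] by (simp add: mult.assoc)
  then have n: "k * (2 * k - 1) \<le> n" using assms(2) by linarith
  have "1 \<le> k * (2 * k - 1)" using k by (cases k) auto
  then have n1: "n \<ge> 1" using n by linarith
  define a where "a = (aa (Suc n) (k - 1)) $ n"
  define g where "g = (G (Suc n) (2 * k)) $ Suc n"
  have core': "2 * a = g" unfolding a_def g_def by (rule core[OF k n])
  have hA: "2 * A (2 * k) n = g" unfolding g_def by (rule A_count[OF k n1])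
  have hB: "real (Be k n) - real (Bo k n) = a" unfolding a_def by (rule B_count[OF k]) simp
  have hC: "real (Ce k (n + 1)) - real (Co k (n + 1)) = a"
    using C_count[OF k, of "Suc n" "Suc n"] unfolding a_def by (simp add: fps_X_mult_nth)
  have hD: "real (D (2 * k) (n + 1)) = g"
    using D_count[of "2 * k" "Suc n" "Suc n"] k unfolding g_def by simp
  show ?thesis using core' hA hB hC hD by simp
qed


end
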